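(* Let $\mathcal{H}$ be a complex Hilbert space and let $A\in\mathcal{B}(\mathcal{H})$ be a positive operator with $\dim R(A)\ge 2$. Let $T\in\mathcal{B}_A(\mathcal{H})$ and $q\in\mathbb{C}$ with $|q|\le 1$, and suppose that $w_{q,A}^2(T)=\frac{|q|^2}{4}\|T^{\sharp_A}T+TT^{\sharp_A}\|_A$. Then for all $\theta\in\mathbb{R}$, \[ |q|^2\|\Re_A(e^{i\theta}T)\|_A^2=|q|^2\|\Im_A(e^{i\theta}T)\|_A^2=\frac{|q|^2}{4}\|T^{\sharp_A}T+TT^{\sharp_A}\|_A . \]
   Context: $A$ induces the semi-inner product $\langle x,y\rangle_A=\langle Ax,y\rangle$ and seminorm $\|x\|_A=\sqrt{\langle x,x\rangle_A}$. For an operator $S$, $\|S\|_A=\sup\{\|Sx\|_A/\|x\|_A : x\in\overline{R(A)},\,x\neq 0\}$. $\mathcal{B}_A(\mathcal{H})$ is the set of operators $T$ admitting an $A$-adjoint (an operator $W$ with $\langle Tx,y\rangle_A=\langle x,Wy\rangle_A$ for all $x,y$), and $T^{\sharp_A}$ denotes the unique solution $X$ of $AX=T^*A$ with $R(X)\subseteq\overline{R(A)}$. $\Re_A(T)=\frac{T+T^{\sharp_A}}{2}$ and $\Im_A(T)=\frac{T-T^{\sharp_A}}{2i}$. The $A$-$q$-numerical radius is $w_{q,A}(T)=\sup\{|\langle Tx,y\rangle_A| : \|x\|_A=\|y\|_A=1,\ \langle x,y\rangle_A=q\}$. *)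

theory Defs
  imports "HOL-Analysis.Analysis"
begin

text \<open>Complex Hilbert spaces (inner product linear in the first argument,
conjugate-linear in the second), as an axiomatic type class, since the
distribution has no complex inner-product-space class.\<close>

class complex_hilbert = ab_group_add +
  fixes hscale :: "complex \<Rightarrow> 'a \<Rightarrow> 'a"
    and hinner :: "'a \<Rightarrow> 'a \<Rightarrow> complex"
  assumes hscale_add_right: "hscale a (x + y) = hscale a x + hscale a y"
    and hscale_add_left: "hscale (a + b) x = hscale a x + hscale b x"
    and hscale_hscale: "hscale a (hscale b x) = hscale (a * b) x"
    and hscale_one: "hscale 1 x = x"
    and hinner_add_left: "hinner (x + y) z = hinner x z + hinner y z"
    and hinner_scale_left: "hinner (hscale a x) y = a * hinner x y"
    and hinner_commute: "hinner y x = cnj (hinner x y)"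
    and hinner_ge_zero: "0 \<le> Re (hinner x x)"
    and hinner_eq_zero: "hinner x x = 0 \<longleftrightarrow> x = 0"
    and hcomplete: "(\<forall>e>0. \<exists>N. \<forall>m\<ge>N. \<forall>n\<ge>N. sqrt (Re (hinner (X m - X n) (X m - X n))) < e)
        \<Longrightarrow> \<exists>L. (\<lambda>n. sqrt (Re (hinner (X n - L) (X n - L)))) \<longlonglongrightarrow> 0"

definition hnorm :: "'a::complex_hilbert \<Rightarrow> real" where
  "hnorm x = sqrt (Re (hinner x x))"

definition hclosure :: "'a::complex_hilbert set \<Rightarrow> 'a set" where
  "hclosure S = {x. \<forall>e>0. \<exists>y\<in>S. hnorm (x - y) < e}"

definition bounded_op :: "('a::complex_hilbert \<Rightarrow> 'a) \<Rightarrow> bool" where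
  "bounded_op T \<longleftrightarrow> (\<forall>x y. T (x + y) = T x + T y) \<and> (\<forall>a x. T (hscale a x) = hscale a (T x))
     \<and> (\<exists>K. \<forall>x. hnorm (T x) \<le> K * hnorm x)"

definition hadj :: "('a::complex_hilbert \<Rightarrow> 'a) \<Rightarrow> ('a \<Rightarrow> 'a)" where
  "hadj T = (THE S. bounded_op S \<and> (\<forall>x y. hinner (T x) y = hinner x (S y)))"

definition positive_op :: "('a::complex_hilbert \<Rightarrow> 'a) \<Rightarrow> bool" where
  "positive_op A \<longleftrightarrow> bounded_op A \<and> (\<forall>x. Im (hinner (A x) x) = 0 \<and> 0 \<le> Re (hinner (A x) x))"

text \<open>dim R(A) >= 2: the range contains two linearly independent vectors.\<close>
definition range_dim_ge_2 :: "('a::complex_hilbert \<Rightarrow> 'a) \<Rightarrow> bool" where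
  "range_dim_ge_2 A \<longleftrightarrow> (\<exists>u\<in>range A. \<exists>v\<in>range A.
      \<forall>a b. hscale a u + hscale b v = 0 \<longrightarrow> a = 0 \<and> b = 0)"

definition inner_A :: "('a::complex_hilbert \<Rightarrow> 'a) \<Rightarrow> 'a \<Rightarrow> 'a \<Rightarrow> complex" where
  "inner_A A x y = hinner (A x) y"

definition norm_A :: "('a::complex_hilbert \<Rightarrow> 'a) \<Rightarrow> 'a \<Rightarrow> real" where
  "norm_A A x = sqrt (Re (inner_A A x x))"

definition opnorm_A :: "('a::complex_hilbert \<Rightarrow> 'a) \<Rightarrow> ('a \<Rightarrow> 'a) \<Rightarrow> real" where
  "opnorm_A A S = Sup {norm_A A (S x) / norm_A A x | x. x \<in> hclosure (range A) \<and> x \<noteq> 0}"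

definition BA :: "('a::complex_hilbert \<Rightarrow> 'a) \<Rightarrow> ('a \<Rightarrow> 'a) set" where
  "BA A = {T. bounded_op T \<and> (\<exists>W. bounded_op W \<and> (\<forall>x y. inner_A A (T x) y = inner_A A x (W y)))}"

definition sharpA :: "('a::complex_hilbert \<Rightarrow> 'a) \<Rightarrow> ('a \<Rightarrow> 'a) \<Rightarrow> ('a \<Rightarrow> 'a)" where
  "sharpA A T = (THE X. bounded_op X \<and> A \<circ> X = hadj T \<circ> A \<and> range X \<subseteq> hclosure (range A))"

definition ReA :: "('a::complex_hilbert \<Rightarrow> 'a) \<Rightarrow> ('a \<Rightarrow> 'a) \<Rightarrow> ('a \<Rightarrow> 'a)" where
  "ReA A T = (\<lambda>x. hscale (1/2) (T x + sharpA A T x))"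

definition ImA :: "('a::complex_hilbert \<Rightarrow> 'a) \<Rightarrow> ('a \<Rightarrow> 'a) \<Rightarrow> ('a \<Rightarrow> 'a)" where
  "ImA A T = (\<lambda>x. hscale (1 / (2 * \<i>)) (T x - sharpA A T x))"

definition wqA :: "complex \<Rightarrow> ('a::complex_hilbert \<Rightarrow> 'a) \<Rightarrow> ('a \<Rightarrow> 'a) \<Rightarrow> real" where
  "wqA q A T = Sup {cmod (inner_A A (T x) y) | x y.
      norm_A A x = 1 \<and> norm_A A y = 1 \<and> inner_A A x y = q}"

end

theory Submission
  imports Defs
begin


lemma hscale_zero_left [simp]: "hscale 0 x = (0::'a::complex_hilbert)"
proof -
  have "hscale 0 x = hscale 0 x + hscale (0::complex) x"
    using hscale_add_left[of 0 0 x] by simp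
  then show ?thesis by simp
qed

lemma hscale_zero_right [simp]: "hscale a (0::'a::complex_hilbert) = 0"
proof -
  have "hscale a (0::'a) = hscale a 0 + hscale a 0"
    using hscale_add_right[of a 0 0] by simp
  then show ?thesis by simp
qed

lemma hscale_minus_left: "hscale (- a) x = - hscale a (x::'a::complex_hilbert)"
proof -
  have "hscale (- a) x + hscale a x = 0"
    using hscale_add_left[of "-a" a x] by simp
  then show ?thesis by (simp add: eq_neg_iff_add_eq_0)
qed

lemma hscale_minus_right: "hscale a (- x) = - hscale a (x::'a::complex_hilbert)"
proof -
  have "hscale a (- x) + hscale a x = 0"
    using hscale_add_right[of a "-x" x] by simp
  then show ?thesis by (simp add: eq_neg_iff_add_eq_0)
qed

lemma hscale_diff_right: "hscale a (x - y) = hscale a x - hscale a (y::'a::complex_hilbert)"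
  using hscale_add_right[of a x "-y"] by (simp add: hscale_minus_right)

lemma hscale_diff_left: "hscale (a - b) x = hscale a x - hscale b (x::'a::complex_hilbert)"
  using hscale_add_left[of a "-b" x] by (simp add: hscale_minus_left)

lemma hscale_neg1 [simp]: "hscale (-1) x = - (x::'a::complex_hilbert)"
  by (simp add: hscale_minus_left hscale_one)

lemma hinner_zero_left [simp]: "hinner 0 (y::'a::complex_hilbert) = 0"
  using hinner_add_left[of 0 0 y] by simp

lemma hinner_zero_right [simp]: "hinner (y::'a::complex_hilbert) 0 = 0"
  using hinner_commute[of 0 y] by simp

lemma hinner_add_right: "hinner x (y + z) = hinner x y + hinner x (z::'a::complex_hilbert)"
  by (metis complex_cnj_add hinner_add_left hinner_commute)

lemma hinner_scale_right: "hinner x (hscale a y) = cnj a * hinner x (y::'a::complex_hilbert)"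
  by (metis complex_cnj_mult hinner_commute hinner_scale_left)

lemma hinner_minus_left: "hinner (- x) y = - hinner x (y::'a::complex_hilbert)"
  using hinner_scale_left[of "-1" x y] by simp

lemma hinner_minus_right: "hinner x (- y) = - hinner x (y::'a::complex_hilbert)"
  using hinner_scale_right[of x "-1" y] by simp

lemma hinner_diff_left: "hinner (x - y) z = hinner x z - hinner y (z::'a::complex_hilbert)"
  using hinner_add_left[of x "-y" z] by (simp add: hinner_minus_left)

lemma hinner_diff_right: "hinner x (y - z) = hinner x y - hinner x (z::'a::complex_hilbert)"
  using hinner_add_right[of x y "-z"] by (simp add: hinner_minus_right)

lemmas hinner_simps = hinner_add_left hinner_add_right hinner_diff_left hinner_diff_right
  hinner_minus_left hinner_minus_right hinner_scale_left hinner_scale_right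

lemma hinner_ext: "(\<And>z. hinner z x = hinner z (y::'a::complex_hilbert)) \<Longrightarrow> x = y"
proof -
  assume h: "\<And>z. hinner z x = hinner z y"
  have "hinner (x - y) (x - y) = 0"
    by (simp add: hinner_diff_right h)
  then show "x = y" using hinner_eq_zero[of "x - y"] by simp
qed

lemma hinner_ext_left: "(\<And>z. hinner x z = hinner (y::'a::complex_hilbert) z) \<Longrightarrow> x = y"
  by (metis hinner_commute hinner_ext)



lemma hnorm_nonneg [simp]: "0 \<le> hnorm x"
  unfolding hnorm_def by (simp add: hinner_ge_zero)

lemma bop_add: "bounded_op T \<Longrightarrow> T (x + y) = T x + T y"
  unfolding bounded_op_def by blast

lemma bop_scale: "bounded_op T \<Longrightarrow> T (hscale a x) = hscale a (T x)"
  unfolding bounded_op_def by blast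

lemma bop_bound: "bounded_op T \<Longrightarrow> \<exists>K>0. \<forall>x. hnorm (T x) \<le> K * hnorm x"
proof -
  assume "bounded_op T"
  then obtain K where K: "\<forall>x. hnorm (T x) \<le> K * hnorm x" unfolding bounded_op_def by blast
  have "hnorm x \<ge> 0" for x :: 'a by simp
  then have "\<forall>x. hnorm (T x) \<le> (max K 1) * hnorm x"
    using K by (meson dual_order.trans max.cobounded1 mult_right_mono)
  then show ?thesis by (intro exI[of _ "max K 1"]) auto
qed

lemma bop_zero [simp]: "bounded_op T \<Longrightarrow> T 0 = 0"
  using bop_scale[of T 0 0] by simp

lemma bop_minus: "bounded_op T \<Longrightarrow> T (- x) = - T x"
  using bop_scale[of T "-1" x] by simp

lemma bop_diff: "bounded_op T \<Longrightarrow> T (x - y) = T x - T y"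
  using bop_add[of T x "-y"] bop_minus[of T y] by simp


lemma hnorm_sq: "(hnorm x)\<^sup>2 = Re (hinner x x)"
  unfolding hnorm_def using hinner_ge_zero by simp

lemma hinner_self_real: "hinner x x = of_real (Re (hinner x x))"
  using hinner_commute[of x x] by (simp add: complex_eq_iff)

lemma bop_id: "bounded_op (\<lambda>x. x)"
  unfolding bounded_op_def by (auto intro: exI[of _ 1])

lemma bop_comp: "bounded_op S \<Longrightarrow> bounded_op T \<Longrightarrow> bounded_op (\<lambda>x. S (T x))"
proof -
  assume s: "bounded_op S" and t: "bounded_op T"
  obtain K1 where K1: "K1 > 0" "\<forall>x. hnorm (S x) \<le> K1 * hnorm x" using bop_bound[OF s] by blast
  obtain K2 where K2: "K2 > 0" "\<forall>x. hnorm (T x) \<le> K2 * hnorm x" using bop_bound[OF t] by blast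
  have "hnorm (S (T x)) \<le> (K1 * K2) * hnorm x" for x
  proof -
    have "hnorm (S (T x)) \<le> K1 * hnorm (T x)" using K1 by blast
    also have "\<dots> \<le> K1 * (K2 * hnorm x)" using K1 K2 by (simp add: mult_left_mono)
    finally show ?thesis by simp
  qed
  then show ?thesis using s t unfolding bounded_op_def by auto
qed

section \<open>Positive operators and semi-inner products\<close>

lemma pos_bop: "positive_op A \<Longrightarrow> bounded_op A"
  unfolding positive_op_def by blast

lemma pos_real: "positive_op A \<Longrightarrow> Im (hinner (A x) x) = 0"
  unfolding positive_op_def by blast

lemma pos_nonneg: "positive_op A \<Longrightarrow> 0 \<le> Re (hinner (A x) x)"
  unfolding positive_op_def by blast

lemma pos_herm:
  assumes A: "positive_op A"
  shows "hinner (A y) x = cnj (hinner (A x) y)"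
proof -
  have b: "bounded_op A" using pos_bop[OF A] .
  define a where "a = hinner (A x) y"
  define c where "c = hinner (A y) x"
  have "Im (hinner (A (x + y)) (x + y)) = 0" using pos_real[OF A] .
  then have "Im (hinner (A x) x + a + c + hinner (A y) y) = 0"
    by (simp add: bop_add[OF b] hinner_simps a_def c_def algebra_simps)
  then have 1: "Im a + Im c = 0" using pos_real[OF A, of x] pos_real[OF A, of y] by simp
  have "Im (hinner (A (x + hscale \<i> y)) (x + hscale \<i> y)) = 0" using pos_real[OF A] .
  then have "Im (hinner (A x) x - \<i> * a + \<i> * c + hinner (A y) y) = 0"
    by (simp add: bop_add[OF b] bop_scale[OF b] hinner_simps a_def c_def algebra_simps)
  then have 2: "- Re a + Re c = 0" using pos_real[OF A, of x] pos_real[OF A, of y] by simp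
  show ?thesis using 1 2 unfolding a_def[symmetric] c_def[symmetric] by (simp add: complex_eq_iff)
qed

lemma pos_sym:
  assumes A: "positive_op A"
  shows "hinner x (A y) = hinner (A x) y"
  by (metis A complex_cnj_cnj hinner_commute pos_herm)

lemma cmod_sq_expand: "cmod z * cmod z = Re z * Re z + Im z * Im z"
  using cmod_power2[of z] by (simp add: power2_eq_square)

lemma quad_lemma:
  fixes b :: complex and X c :: real
  assumes h: "\<And>t::complex. 0 \<le> X - 2 * Re (cnj t * b) + (cmod t)\<^sup>2 * c"
    and c: "0 \<le> c"
  shows "(cmod b)\<^sup>2 \<le> X * c"
proof (cases "c = 0")
  case True
  show ?thesis
  proof (rule ccontr)
    assume "\<not> ?thesis"
    then have bz: "(cmod b)\<^sup>2 > 0" using True by simp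
    define s where "s = (\<bar>X\<bar> + 1) / (2 * (cmod b)\<^sup>2)"
    have "Re (cnj (of_real s) * b) = s * Re b" by simp
    have "cnj (complex_of_real s) * b = of_real s * b" by simp
    have "cnj (complex_of_real s * b) * b = of_real s * (b * cnj b)" by simp
    then have "Re (cnj (complex_of_real s * b) * b) = s * (cmod b)\<^sup>2"
      by (simp only: complex_norm_square[symmetric]) simp
    then have "0 \<le> X - 2 * (s * (cmod b)\<^sup>2)" using h[of "of_real s * b"] True by simp
    also have "2 * (s * (cmod b)\<^sup>2) = \<bar>X\<bar> + 1" unfolding s_def using bz by simp
    finally show False by linarith
  qed
next
  case False
  then have cp: "c > 0" using c by simp
  define t where "t = b / of_real c"
  have 1: "Re (cnj t * b) = (cmod b)\<^sup>2 / c"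
    unfolding t_def by (simp add: cmod_power2 power2_eq_square field_simps cmod_sq_expand)
  have 2: "(cmod t)\<^sup>2 = (cmod b)\<^sup>2 / c\<^sup>2"
    unfolding t_def by (simp add: norm_divide power_divide)
  have "0 \<le> X - 2 * ((cmod b)\<^sup>2 / c) + (cmod b)\<^sup>2 / c\<^sup>2 * c"
    using h[of t] 1 2 by simp
  also have "(cmod b)\<^sup>2 / c\<^sup>2 * c = (cmod b)\<^sup>2 / c" using cp by (simp add: power2_eq_square)
  finally have "0 \<le> X - (cmod b)\<^sup>2 / c" by simp
  then have "(cmod b)\<^sup>2 / c \<le> X" by simp
  then show ?thesis using cp by (simp add: divide_le_eq mult.commute)
qed

lemma pos_expand:
  assumes A: "positive_op A"
  shows "Re (hinner (A (x - hscale t y)) (x - hscale t y)) =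
     Re (hinner (A x) x) - 2 * Re (cnj t * hinner (A x) y) + (cmod t)\<^sup>2 * Re (hinner (A y) y)"
proof -
  have b: "bounded_op A" using pos_bop[OF A] .
  have e: "hinner (A (x - hscale t y)) (x - hscale t y) =
     hinner (A x) x - cnj t * hinner (A x) y - t * hinner (A y) x + t * cnj t * hinner (A y) y"
    by (simp add: bop_diff[OF b] bop_scale[OF b] hinner_simps algebra_simps)
  have h: "hinner (A y) x = cnj (hinner (A x) y)" using pos_herm[OF A] .
  have "Re (t * cnj (hinner (A x) y)) = Re (cnj t * hinner (A x) y)"
    by simp
  moreover have "Re (t * cnj t * hinner (A y) y) = (cmod t)\<^sup>2 * Re (hinner (A y) y)"
    using pos_real[OF A, of y]
    by (simp add: complex_mult_cnj cmod_power2 power2_eq_square cmod_sq_expand)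
  ultimately show ?thesis unfolding e h by simp
qed

lemma pos_CS:
  assumes A: "positive_op A"
  shows "(cmod (hinner (A x) y))\<^sup>2 \<le> Re (hinner (A x) x) * Re (hinner (A y) y)"
  apply (rule quad_lemma)
  using pos_expand[OF A, of x _ y, symmetric] pos_nonneg[OF A] by auto

lemma normA_nonneg [simp]: "positive_op A \<Longrightarrow> 0 \<le> norm_A A x"
  unfolding norm_A_def inner_A_def using pos_nonneg by simp

lemma normA_sq: "positive_op A \<Longrightarrow> (norm_A A x)\<^sup>2 = Re (hinner (A x) x)"
  unfolding norm_A_def inner_A_def using pos_nonneg by auto

lemma innerA_self: "positive_op A \<Longrightarrow> inner_A A x x = of_real ((norm_A A x)\<^sup>2)"
  by (simp add: normA_sq inner_A_def complex_eq_iff pos_real)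

lemma pos_CS2:
  assumes A: "positive_op A"
  shows "cmod (inner_A A x y) \<le> norm_A A x * norm_A A y"
proof -
  have "(cmod (inner_A A x y))\<^sup>2 \<le> (norm_A A x * norm_A A y)\<^sup>2"
    using pos_CS[OF A, of x y] by (simp add: normA_sq[OF A] power_mult_distrib inner_A_def)
  then show ?thesis by (rule power2_le_imp_le) (simp add: A)
qed

lemma normA_triangle:
  assumes A: "positive_op A"
  shows "norm_A A (x + y) \<le> norm_A A x + norm_A A y"
proof -
  have b: "bounded_op A" using pos_bop[OF A] .
  have e: "hinner (A (x + y)) (x + y) = hinner (A x) x + hinner (A x) y + cnj (hinner (A x) y) + hinner (A y) y"
    by (simp add: bop_add[OF b] hinner_simps pos_herm[OF A, of y x])
  have "Re (hinner (A x) y) \<le> cmod (inner_A A x y)" unfolding inner_A_def by (rule complex_Re_le_cmod)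
  also have "\<dots> \<le> norm_A A x * norm_A A y" by (rule pos_CS2[OF A])
  finally have "(norm_A A (x + y))\<^sup>2 \<le> (norm_A A x + norm_A A y)\<^sup>2"
    by (simp add: normA_sq[OF A] e power2_sum)
  then show ?thesis by (rule power2_le_imp_le) (simp add: A)
qed

lemma normA_scale:
  assumes A: "positive_op A"
  shows "norm_A A (hscale c x) = cmod c * norm_A A x"
proof -
  have b: "bounded_op A" using pos_bop[OF A] .
  have "hinner (A (hscale c x)) (hscale c x) = (c * cnj c) * hinner (A x) x"
    by (simp add: bop_scale[OF b] hinner_simps)
  then have "(norm_A A (hscale c x))\<^sup>2 = (cmod c * norm_A A x)\<^sup>2"
    using pos_real[OF A, of x]
    by (simp add: normA_sq[OF A] complex_mult_cnj power_mult_distrib cmod_power2)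
  then show ?thesis by (simp add: power2_eq_iff_nonneg A)
qed

lemma normA_minus: "positive_op A \<Longrightarrow> norm_A A (- x) = norm_A A x"
  using normA_scale[of A "-1" x] by simp

lemma normA_diff_triangle:
  "positive_op A \<Longrightarrow> norm_A A (x - y) \<le> norm_A A x + norm_A A y"
  using normA_triangle[of A x "-y"] normA_minus[of A y] by simp

lemma pos_id: "positive_op (\<lambda>x. x)"
  unfolding positive_op_def using bop_id hinner_ge_zero hinner_self_real
  by (metis Im_complex_of_real)

lemma normA_id: "norm_A (\<lambda>x. x) x = hnorm x"
  unfolding norm_A_def hnorm_def inner_A_def by simp

lemma hnorm_triangle: "hnorm (x + y) \<le> hnorm x + hnorm y"
  using normA_triangle[OF pos_id] by (simp add: normA_id)

lemma hnorm_diff_triangle: "hnorm (x - y) \<le> hnorm x + hnorm y"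
  using normA_diff_triangle[OF pos_id] by (simp add: normA_id)

lemma hnorm_scale: "hnorm (hscale c x) = cmod c * hnorm x"
  using normA_scale[OF pos_id] by (simp add: normA_id)

lemma hnorm_minus: "hnorm (- x) = hnorm x"
  using normA_minus[OF pos_id] by (simp add: normA_id)

lemma hnorm_CS: "cmod (hinner x y) \<le> hnorm x * hnorm y"
  using pos_CS2[OF pos_id] by (simp add: normA_id inner_A_def)

lemma hnorm_commute: "hnorm (x - y) = hnorm (y - x)"
  by (metis hnorm_minus minus_diff_eq)

lemma hnorm_zero_iff: "hnorm x = 0 \<longleftrightarrow> x = 0"
proof -
  have "hnorm x = 0 \<longleftrightarrow> Re (hinner x x) = 0" unfolding hnorm_def using hinner_ge_zero[of x] by simp
  also have "\<dots> \<longleftrightarrow> hinner x x = 0" using hinner_self_real[of x] by (metis of_real_eq_0_iff zero_complex.sel(1))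
  finally show ?thesis using hinner_eq_zero by simp
qed

lemma hinner_self_eq: "hinner x x = of_real ((hnorm x)\<^sup>2)"
  using hinner_self_real hnorm_sq by metis



section \<open>Projection onto closed subspaces\<close>

definition csub :: "'a::complex_hilbert set \<Rightarrow> bool" where
  "csub M \<longleftrightarrow> 0 \<in> M \<and> (\<forall>x\<in>M. \<forall>y\<in>M. x + y \<in> M) \<and> (\<forall>a. \<forall>x\<in>M. hscale a x \<in> M)
     \<and> hclosure M \<subseteq> M"

lemma csub_add: "csub M \<Longrightarrow> x \<in> M \<Longrightarrow> y \<in> M \<Longrightarrow> x + y \<in> M"
  unfolding csub_def by blast
lemma csub_scale: "csub M \<Longrightarrow> x \<in> M \<Longrightarrow> hscale a x \<in> M"
  unfolding csub_def by blast
lemma csub_diff: "csub M \<Longrightarrow> x \<in> M \<Longrightarrow> y \<in> M \<Longrightarrow> x - y \<in> M"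
  using csub_add[of M x "hscale (-1) y"] csub_scale[of M y "-1"] by simp
lemma csub_closed: "csub M \<Longrightarrow> hclosure M \<subseteq> M"
  unfolding csub_def by blast
lemma csub_zero: "csub M \<Longrightarrow> 0 \<in> M"
  unfolding csub_def by blast

lemma parallelogram:
  "(hnorm (u + v))\<^sup>2 + (hnorm (u - v))\<^sup>2 = 2 * (hnorm u)\<^sup>2 + 2 * (hnorm v)\<^sup>2"
proof -
  have "hinner (u + v) (u + v) + hinner (u - v) (u - v) = 2 * hinner u u + 2 * hinner v v"
    by (simp add: hinner_simps algebra_simps)
  from arg_cong[where f=Re, OF this] show ?thesis by (simp add: hnorm_sq)
qed

lemma hnorm_sq_expand:
  "(hnorm (x - hscale t y))\<^sup>2 = (hnorm x)\<^sup>2 - 2 * Re (cnj t * hinner x y) + (cmod t)\<^sup>2 * (hnorm y)\<^sup>2"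
  using pos_expand[OF pos_id, of x t y] by (simp add: hnorm_sq)

lemma proj_exists:
  assumes M: "csub M"
  shows "\<exists>m\<in>M. \<forall>z\<in>M. hinner (x - m) z = 0"
proof -
  define D where "D = (\<lambda>m. hnorm (x - m)) ` M"
  define d where "d = Inf D"
  have Dne: "D \<noteq> {}" using csub_zero[OF M] unfolding D_def by blast
  have Dbdd: "bdd_below D" unfolding D_def by (rule bdd_belowI[of _ 0]) auto
  have d0: "0 \<le> d" unfolding d_def using Dne by (rule cInf_greatest) (auto simp: D_def)
  have dle: "d \<le> hnorm (x - z)" if "z \<in> M" for z
    unfolding d_def using Dbdd that by (intro cInf_lower) (auto simp: D_def)
  have ex: "\<exists>m\<in>M. (hnorm (x - m))\<^sup>2 < d\<^sup>2 + inverse (real (Suc n))" for n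
  proof -
    have "d < sqrt (d\<^sup>2 + inverse (real (Suc n)))"
      by (intro real_less_rsqrt) simp
    then obtain y where y: "y \<in> D" "y < sqrt (d\<^sup>2 + inverse (real (Suc n)))"
      using cInf_lessD[OF Dne] unfolding d_def by blast
    then obtain m where m: "m \<in> M" "y = hnorm (x - m)" unfolding D_def by blast
    have "y\<^sup>2 < (sqrt (d\<^sup>2 + inverse (real (Suc n))))\<^sup>2"
      using y(2) m(2) by (intro power_strict_mono) auto
    then have "y\<^sup>2 < d\<^sup>2 + inverse (real (Suc n))" by simp
    then show ?thesis using m by blast
  qed
  then obtain mm where mm: "\<And>n. mm n \<in> M" "\<And>n. (hnorm (x - mm n))\<^sup>2 < d\<^sup>2 + inverse (real (Suc n))"
    by metis
  have cauchy_sq: "(hnorm (mm n - mm k))\<^sup>2 \<le> 2 * inverse (real (Suc n)) + 2 * inverse (real (Suc k))" for n k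
  proof -
    have mid: "hscale (1/2) (mm n + mm k) \<in> M" using mm(1) M by (simp add: csub_add csub_scale)
    have "(x - mm n) + (x - mm k) = hscale 2 (x - hscale (1/2) (mm n + mm k))"
    proof -
      have "hscale 2 (x - hscale (1/2) (mm n + mm k)) = hscale 2 x - hscale (2 * (1/2)) (mm n + mm k)"
        by (simp add: hscale_diff_right hscale_hscale)
      also have "hscale 2 x = x + x" using hscale_add_left[of 1 1 x] by (simp add: hscale_one)
      finally show ?thesis by (simp add: hscale_one algebra_simps)
    qed
    then have "hnorm ((x - mm n) + (x - mm k)) = 2 * hnorm (x - hscale (1/2) (mm n + mm k))"
      by (simp add: hnorm_scale)
    then have "hnorm ((x - mm n) + (x - mm k)) \<ge> 2 * d" using dle[OF mid] by simp
    then have h1: "(hnorm ((x - mm n) + (x - mm k)))\<^sup>2 \<ge> 4 * d\<^sup>2"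
      using d0 power_mono[of "2 * d" _ 2] by (simp add: power_mult_distrib)
    have "(x - mm n) - (x - mm k) = mm k - mm n" by simp
    then have "(hnorm (mm n - mm k))\<^sup>2 = 2 * (hnorm (x - mm n))\<^sup>2 + 2 * (hnorm (x - mm k))\<^sup>2
        - (hnorm ((x - mm n) + (x - mm k)))\<^sup>2"
      using parallelogram[of "x - mm n" "x - mm k"] hnorm_commute[of "mm n" "mm k"] by simp
    then show ?thesis using h1 mm(2)[of n] mm(2)[of k] by simp
  qed
  have "\<exists>L. (\<lambda>n. sqrt (Re (hinner (mm n - L) (mm n - L)))) \<longlonglongrightarrow> 0"
  proof (rule hcomplete, intro allI impI)
    fix e :: real assume e: "e > 0"
    obtain N :: nat where N: "inverse (real (Suc N)) < e\<^sup>2 / 4"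
      using e by (metis reals_Archimedean zero_less_divide_iff zero_less_numeral zero_less_power)
    show "\<exists>N. \<forall>m\<ge>N. \<forall>n\<ge>N. sqrt (Re (hinner (mm m - mm n) (mm m - mm n))) < e"
    proof (intro exI allI impI)
      fix m n assume mn: "N \<le> m" "N \<le> n"
      have "inverse (real (Suc m)) \<le> inverse (real (Suc N))" using mn by (simp add: le_imp_inverse_le)
      moreover have "inverse (real (Suc n)) \<le> inverse (real (Suc N))" using mn by (simp add: le_imp_inverse_le)
      ultimately have "(hnorm (mm m - mm n))\<^sup>2 < e\<^sup>2" using cauchy_sq[of m n] N by linarith
      then have "hnorm (mm m - mm n) < e" using e by (simp add: power_less_imp_less_base)
      then show "sqrt (Re (hinner (mm m - mm n) (mm m - mm n))) < e" by (simp add: hnorm_def)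
    qed
  qed
  then obtain L where L: "(\<lambda>n. hnorm (mm n - L)) \<longlonglongrightarrow> 0" unfolding hnorm_def by blast
  have LM: "L \<in> M"
  proof -
    have "L \<in> hclosure M" unfolding hclosure_def
    proof (intro CollectI allI impI)
      fix e :: real assume "e > 0"
      then obtain n where "\<bar>hnorm (mm n - L) - 0\<bar> < e" using L unfolding LIMSEQ_def dist_real_def by blast
      then show "\<exists>y\<in>M. hnorm (L - y) < e" using mm(1) hnorm_commute by (metis abs_of_nonneg diff_zero hnorm_nonneg)
    qed
    then show ?thesis using csub_closed[OF M] by blast
  qed
  have Lmin: "hnorm (x - L) \<le> d"
  proof -
    have lim: "(\<lambda>n. sqrt (d\<^sup>2 + inverse (real (Suc n))) + hnorm (mm n - L)) \<longlonglongrightarrow> sqrt (d\<^sup>2 + 0) + 0"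
      by (intro tendsto_intros L LIMSEQ_inverse_real_of_nat)
    have "hnorm (x - L) \<le> sqrt (d\<^sup>2 + inverse (real (Suc n))) + hnorm (mm n - L)" for n
    proof -
      have "hnorm (x - mm n) < sqrt (d\<^sup>2 + inverse (real (Suc n)))"
        using mm(2)[of n] real_sqrt_less_mono[of "(hnorm (x - mm n))\<^sup>2"] by simp
      moreover have "hnorm (x - L) \<le> hnorm (x - mm n) + hnorm (mm n - L)"
        using hnorm_triangle[of "x - mm n" "mm n - L"] by simp
      ultimately show ?thesis by simp
    qed
    then have "hnorm (x - L) \<le> sqrt (d\<^sup>2 + 0) + 0" by (intro LIMSEQ_le_const[OF lim]) auto
    then show ?thesis using d0 by simp
  qed
  have orth: "hinner (x - L) z = 0" if z: "z \<in> M" for z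
  proof -
    have "(cmod (hinner (x - L) z))\<^sup>2 \<le> 0 * (hnorm z)\<^sup>2"
    proof (rule quad_lemma)
      fix t :: complex
      have "L + hscale t z \<in> M" using M LM z by (simp add: csub_add csub_scale)
      then have "hnorm (x - L) \<le> hnorm (x - (L + hscale t z))" using Lmin dle by fastforce
      then have "(hnorm (x - L))\<^sup>2 \<le> (hnorm ((x - L) - hscale t z))\<^sup>2"
        by (simp add: power_mono diff_diff_eq)
      then show "0 \<le> 0 - 2 * Re (cnj t * hinner (x - L) z) + (cmod t)\<^sup>2 * (hnorm z)\<^sup>2"
        using hnorm_sq_expand[of "x - L" t z] by simp
    qed simp
    then show ?thesis by simp
  qed
  show ?thesis using LM orth by blast
qed

definition proj :: "'a::complex_hilbert set \<Rightarrow> 'a \<Rightarrow> 'a" where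
  "proj M x = (SOME m. m \<in> M \<and> (\<forall>z\<in>M. hinner (x - m) z = 0))"

lemma proj_prop:
  assumes "csub M" shows "proj M x \<in> M" "\<And>z. z \<in> M \<Longrightarrow> hinner (x - proj M x) z = 0"
proof -
  have "proj M x \<in> M \<and> (\<forall>z\<in>M. hinner (x - proj M x) z = 0)"
    unfolding proj_def using proj_exists[OF assms, of x] someI_ex[of "\<lambda>m. m \<in> M \<and> (\<forall>z\<in>M. hinner (x - m) z = 0)"] by blast
  then show "proj M x \<in> M" "\<And>z. z \<in> M \<Longrightarrow> hinner (x - proj M x) z = 0" by auto
qed

lemma proj_unique:
  assumes M: "csub M" and m: "m \<in> M" "\<And>z. z \<in> M \<Longrightarrow> hinner (x - m) z = 0"
  shows "proj M x = m"
proof -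
  let ?p = "proj M x"
  have d: "?p - m \<in> M" using proj_prop(1)[OF M] m(1) M by (simp add: csub_diff)
  have "hinner (?p - m) (?p - m) = hinner (x - m) (?p - m) - hinner (x - ?p) (?p - m)"
    by (simp add: hinner_simps)
  also have "\<dots> = 0" using m(2)[OF d] proj_prop(2)[OF M d] by simp
  finally show ?thesis using hinner_eq_zero[of "?p - m"] by simp
qed

lemma proj_add:
  assumes M: "csub M" shows "proj M (x + y) = proj M x + proj M y"
proof (rule proj_unique[OF M])
  show "proj M x + proj M y \<in> M" using proj_prop(1)[OF M] M by (simp add: csub_add)
  fix z assume z: "z \<in> M"
  have "x + y - (proj M x + proj M y) = (x - proj M x) + (y - proj M y)" by simp
  then show "hinner (x + y - (proj M x + proj M y)) z = 0"
    using proj_prop(2)[OF M z, of x] proj_prop(2)[OF M z, of y] by (simp only: hinner_add_left) simp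
qed

lemma proj_scale:
  assumes M: "csub M" shows "proj M (hscale a x) = hscale a (proj M x)"
proof (rule proj_unique[OF M])
  show "hscale a (proj M x) \<in> M" using proj_prop(1)[OF M] M by (simp add: csub_scale)
  fix z assume "z \<in> M"
  have "hscale a x - hscale a (proj M x) = hscale a (x - proj M x)" by (simp add: hscale_diff_right)
  then show "hinner (hscale a x - hscale a (proj M x)) z = 0"
    using proj_prop(2)[OF M \<open>z \<in> M\<close>] by (simp add: hinner_scale_left)
qed

lemma proj_norm:
  assumes M: "csub M" shows "hnorm (proj M x) \<le> hnorm x"
proof -
  have o: "hinner (x - proj M x) (proj M x) = 0" using proj_prop[OF M] by blast
  define p where "p = proj M x"
  have "hinner x x = hinner ((x - p) + p) ((x - p) + p)" by simp
  also have "\<dots> = hinner (x - p) (x - p) + hinner p p + hinner (x - p) p + hinner p (x - p)"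
    by (simp only: hinner_add_left hinner_add_right add_ac)
  finally have "hinner x x = hinner (x - proj M x) (x - proj M x) + hinner (proj M x) (proj M x)
      + hinner (x - proj M x) (proj M x) + cnj (hinner (x - proj M x) (proj M x))"
    unfolding p_def using hinner_commute[of p "x - p"] by (simp add: p_def)
  then have "(hnorm x)\<^sup>2 = (hnorm (x - proj M x))\<^sup>2 + (hnorm (proj M x))\<^sup>2"
    using o by (simp add: hnorm_sq)
  then have "(hnorm (proj M x))\<^sup>2 \<le> (hnorm x)\<^sup>2" by simp
  then show ?thesis by (rule power2_le_imp_le) simp
qed

lemma proj_bop: "csub M \<Longrightarrow> bounded_op (proj M)"
  unfolding bounded_op_def using proj_add proj_scale proj_norm
  by (intro conjI allI exI[of _ 1]) auto



section \<open>Riesz representation and adjoints\<close>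

lemma riesz:
  fixes f :: "'a::complex_hilbert \<Rightarrow> complex"
  assumes add: "\<And>x y. f (x + y) = f x + f y"
    and scale: "\<And>a x. f (hscale a x) = a * f x"
    and bnd: "\<And>x. cmod (f x) \<le> C * hnorm x"
  shows "\<exists>v. \<forall>x. f x = hinner x v"
proof (cases "\<forall>x. f x = 0")
  case True
  then show ?thesis by (intro exI[of _ 0]) simp
next
  case False
  then obtain x0 where x0: "f x0 \<noteq> 0" by blast
  have f0: "f 0 = 0" using scale[of 0 0] by simp
  have fdiff: "f (x - y) = f x - f y" for x y
    using add[of x "hscale (-1) y"] scale[of "-1" y] by simp
  define K where "K = {x. f x = 0}"
  have K: "csub K"
    unfolding csub_def
  proof (intro conjI ballI allI subsetI)
    show "0 \<in> K" using f0 K_def by simp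
    show "x + y \<in> K" if "x \<in> K" "y \<in> K" for x y using that add by (simp add: K_def)
    show "hscale a x \<in> K" if "x \<in> K" for a x using that scale by (simp add: K_def)
    fix x assume x: "x \<in> hclosure K"
    show "x \<in> K"
    proof (rule ccontr)
      assume "x \<notin> K"
      then have fx: "cmod (f x) > 0" by (simp add: K_def)
      define C' where "C' = max C 1"
      have C': "C' > 0" "C \<le> C'" unfolding C'_def by auto
      have ep: "cmod (f x) / (2 * C') > 0" using fx C' by simp
      obtain y where y: "y \<in> K" "hnorm (x - y) < cmod (f x) / (2 * C')"
        using x ep unfolding hclosure_def by blast
      have "cmod (f x) = cmod (f (x - y))" using y(1) fdiff[of x y] by (simp add: K_def)
      also have "\<dots> \<le> C * hnorm (x - y)" by (rule bnd)
      also have "\<dots> \<le> C' * hnorm (x - y)" using C' by (simp add: mult_right_mono)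
      also have "\<dots> \<le> C' * (cmod (f x) / (2 * C'))" using mult_left_mono[OF less_imp_le[OF y(2)], of C'] C' by simp
      also have "\<dots> = cmod (f x) / 2" using C' by simp
      finally show False using fx by simp
    qed
  qed
  define z where "z = x0 - proj K x0"
  have fz: "f z \<noteq> 0" using x0 proj_prop(1)[OF K, of x0] unfolding z_def by (simp add: fdiff K_def)
  have zo: "\<And>w. w \<in> K \<Longrightarrow> hinner z w = 0" using proj_prop(2)[OF K] unfolding z_def by blast
  have "z \<noteq> 0" using fz f0 by auto
  then have zz: "hinner z z \<noteq> 0" using hinner_eq_zero[of z] by simp
  define v where "v = hscale (cnj (f z / hinner z z)) z"
  have "f x = hinner x v" for x
  proof -
    define w where "w = x - hscale (f x / f z) z"
    have "w \<in> K" unfolding w_def K_def using fz by (simp add: fdiff scale)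
    then have "hinner w z = 0" using zo[of w] hinner_commute[of z w] by simp
    then have "hinner x z = (f x / f z) * hinner z z" unfolding w_def by (simp add: hinner_simps)
    then show ?thesis unfolding v_def using fz zz by (simp add: hinner_simps field_simps)
  qed
  then show ?thesis by blast
qed

lemma adj_exists:
  assumes T: "bounded_op T"
  shows "\<exists>S. bounded_op S \<and> (\<forall>x y. hinner (T x) y = hinner x (S y))"
proof -
  obtain K where K: "K > 0" "\<And>x. hnorm (T x) \<le> K * hnorm x" using bop_bound[OF T] by blast
  have ex: "\<exists>v. \<forall>x. hinner (T x) y = hinner x v" for y
  proof (rule riesz)
    show "hinner (T (x + z)) y = hinner (T x) y + hinner (T z) y" for x z by (simp add: bop_add[OF T] hinner_simps)
    show "hinner (T (hscale a x)) y = a * hinner (T x) y" for a x by (simp add: bop_scale[OF T] hinner_simps)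
    show "cmod (hinner (T x) y) \<le> (K * hnorm y) * hnorm x" for x
    proof -
      have "cmod (hinner (T x) y) \<le> hnorm (T x) * hnorm y" by (rule hnorm_CS)
      also have "\<dots> \<le> K * hnorm x * hnorm y" using K by (simp add: mult_right_mono)
      finally show ?thesis by (simp add: algebra_simps)
    qed
  qed
  define S where "S y = (SOME v. \<forall>x. hinner (T x) y = hinner x v)" for y
  have S: "hinner (T x) y = hinner x (S y)" for x y
    unfolding S_def using someI_ex[OF ex[of y]] by blast
  have Sadd: "S (y + z) = S y + S z" for y z
    by (rule hinner_ext) (simp add: S[symmetric] hinner_simps)
  have Sscale: "S (hscale a y) = hscale a (S y)" for a y
    by (rule hinner_ext) (simp add: S[symmetric] hinner_simps)
  have Sbnd: "hnorm (S y) \<le> K * hnorm y" for y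
  proof (cases "hnorm (S y) = 0")
    case True then show ?thesis using K by simp
  next
    case False
    have "(hnorm (S y))\<^sup>2 = Re (hinner (T (S y)) y)" by (simp only: hnorm_sq S)
    also have "\<dots> \<le> cmod (hinner (T (S y)) y)" by (rule complex_Re_le_cmod)
    also have "\<dots> \<le> hnorm (T (S y)) * hnorm y" by (rule hnorm_CS)
    also have "\<dots> \<le> K * hnorm (S y) * hnorm y" using K by (simp add: mult_right_mono)
    finally have "hnorm (S y) * hnorm (S y) \<le> hnorm (S y) * (K * hnorm y)"
      by (simp add: power2_eq_square algebra_simps)
    then show ?thesis using False hnorm_nonneg[of "S y"] by (simp add: mult_le_cancel_left)
  qed
  show ?thesis unfolding bounded_op_def using Sadd Sscale Sbnd S by blast
qed

lemma hadj_prop: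
  assumes T: "bounded_op T"
  shows "bounded_op (hadj T)" "\<And>x y. hinner (T x) y = hinner x (hadj T y)"
proof -
  have "\<exists>!S. bounded_op S \<and> (\<forall>x y. hinner (T x) y = hinner x (S y))"
  proof (rule ex_ex1I)
    show "\<exists>S. bounded_op S \<and> (\<forall>x y. hinner (T x) y = hinner x (S y))" by (rule adj_exists[OF T])
    fix S1 S2 assume "bounded_op S1 \<and> (\<forall>x y. hinner (T x) y = hinner x (S1 y))"
      "bounded_op S2 \<and> (\<forall>x y. hinner (T x) y = hinner x (S2 y))"
    then show "S1 = S2" by (intro ext hinner_ext) simp
  qed
  then have "bounded_op (hadj T) \<and> (\<forall>x y. hinner (T x) y = hinner x (hadj T y))"
    unfolding hadj_def by (rule theI')
  then show "bounded_op (hadj T)" "\<And>x y. hinner (T x) y = hinner x (hadj T y)" by auto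
qed



section \<open>Closure of the range and the A-adjoint\<close>

lemma hnorm_zero [simp]: "hnorm 0 = 0"
  using hnorm_zero_iff by blast

lemma in_hclosure: "x \<in> S \<Longrightarrow> x \<in> hclosure S"
  unfolding hclosure_def by (intro CollectI allI impI bexI[of _ x]) (auto simp: hnorm_zero_iff)

lemma hclosure_csub:
  assumes z: "0 \<in> S" and ad: "\<And>x y. x \<in> S \<Longrightarrow> y \<in> S \<Longrightarrow> x + y \<in> S"
    and sc: "\<And>a x. x \<in> S \<Longrightarrow> hscale a x \<in> S"
  shows "csub (hclosure S)"
  unfolding csub_def
proof (intro conjI ballI allI subsetI)
  show "0 \<in> hclosure S" using z by (rule in_hclosure)
  fix x y assume x: "x \<in> hclosure S" and y: "y \<in> hclosure S"
  show "x + y \<in> hclosure S" unfolding hclosure_def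
  proof (intro CollectI allI impI)
    fix e :: real assume e: "e > 0"
    then have e2: "e / 2 > 0" by simp
    obtain x' where x': "x' \<in> S" "hnorm (x - x') < e / 2" using x e2 unfolding hclosure_def by blast
    obtain y' where y': "y' \<in> S" "hnorm (y - y') < e / 2" using y e2 unfolding hclosure_def by blast
    have "hnorm (x + y - (x' + y')) \<le> hnorm (x - x') + hnorm (y - y')"
      using hnorm_triangle[of "x - x'" "y - y'"] by (simp add: algebra_simps)
    then show "\<exists>w\<in>S. hnorm (x + y - w) < e" using x' y' ad by (intro bexI[of _ "x' + y'"]) auto
  qed
next
  fix a x assume x: "x \<in> hclosure S"
  show "hscale a x \<in> hclosure S" unfolding hclosure_def
  proof (intro CollectI allI impI)
    fix e :: real assume e: "e > 0"
    have "cmod a + 1 > 0" by (simp add: add_nonneg_pos)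
    then have e2: "e / (cmod a + 1) > 0" using e by simp
    obtain x' where x': "x' \<in> S" "hnorm (x - x') < e / (cmod a + 1)" using x e2 unfolding hclosure_def by blast
    have "hnorm (hscale a x - hscale a x') = cmod a * hnorm (x - x')"
      by (simp add: hscale_diff_right[symmetric] hnorm_scale)
    also have "\<dots> \<le> (cmod a + 1) * hnorm (x - x')" by (simp add: mult_right_mono)
    also have "\<dots> < (cmod a + 1) * (e / (cmod a + 1))"
      using x'(2) \<open>cmod a + 1 > 0\<close> by (intro mult_strict_left_mono) auto
    also have "\<dots> = e" using \<open>cmod a + 1 > 0\<close> by simp
    finally show "\<exists>w\<in>S. hnorm (hscale a x - w) < e" using x' sc by blast
  qed
next
  fix x assume x: "x \<in> hclosure (hclosure S)"
  show "x \<in> hclosure S" unfolding hclosure_def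
  proof (intro CollectI allI impI)
    fix e :: real assume e: "e > 0"
    then have e2: "e / 2 > 0" by simp
    obtain y where y: "y \<in> hclosure S" "hnorm (x - y) < e / 2" using x e2 unfolding hclosure_def by blast
    obtain w where w: "w \<in> S" "hnorm (y - w) < e / 2" using y(1) e2 unfolding hclosure_def by blast
    have "hnorm (x - w) \<le> hnorm (x - y) + hnorm (y - w)"
      using hnorm_triangle[of "x - y" "y - w"] by simp
    then show "\<exists>w\<in>S. hnorm (x - w) < e" using y w by (intro bexI[of _ w]) auto
  qed
qed

lemma csub_range:
  assumes A: "bounded_op A" shows "csub (hclosure (range A))"
proof (rule hclosure_csub)
  show "0 \<in> range A" using bop_zero[OF A] rangeI[of A 0] by simp
  show "x + y \<in> range A" if hx: "x \<in> range A" and hy: "y \<in> range A" for x y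
  proof -
    obtain u v where "x = A u" "y = A v" using hx hy by blast
    then have "x + y = A (u + v)" using bop_add[OF A] by simp
    then show ?thesis by simp
  qed
  show "hscale a x \<in> range A" if hx: "x \<in> range A" for a x
  proof -
    obtain u where "x = A u" using hx by blast
    then have "hscale a x = A (hscale a u)" using bop_scale[OF A] by simp
    then show ?thesis by simp
  qed
qed

lemma hclosure_perp_zero:
  assumes u: "u \<in> hclosure S" and p: "\<And>a. a \<in> S \<Longrightarrow> hinner u a = 0"
  shows "u = 0"
proof -
  have "cmod (hinner u u) \<le> hnorm u * e" if e: "e > 0" for e
  proof -
    obtain a where a: "a \<in> S" "hnorm (u - a) < e" using u e unfolding hclosure_def by blast
    have "hinner u u = hinner u (u - a)" using p[OF a(1)] by (simp add: hinner_simps)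
    then have "cmod (hinner u u) \<le> hnorm u * hnorm (u - a)" using hnorm_CS by simp
    also have "\<dots> \<le> hnorm u * e" using a(2) by (simp add: mult_left_mono)
    finally show ?thesis .
  qed
  then have "cmod (hinner u u) \<le> 0"
  proof (cases "hnorm u = 0")
    case True then show ?thesis using \<open>\<And>e. e > 0 \<Longrightarrow> _\<close>[of 1] by simp
  next
    case False
    then have hp: "hnorm u > 0" using hnorm_nonneg[of u] by linarith
    show ?thesis
    proof (rule ccontr)
      assume "\<not> ?thesis"
      then have c: "cmod (hinner u u) > 0" by simp
      have "cmod (hinner u u) \<le> hnorm u * (cmod (hinner u u) / (2 * hnorm u))"
        using \<open>\<And>e. e > 0 \<Longrightarrow> _\<close>[of "cmod (hinner u u) / (2 * hnorm u)"] c hp by simp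
      also have "\<dots> = cmod (hinner u u) / 2" using hp by simp
      finally show False using c by simp
    qed
  qed
  then show ?thesis using hinner_eq_zero[of u] by simp
qed

lemma pos_null:
  assumes A: "positive_op A" and n: "norm_A A u = 0" shows "A u = 0"
proof -
  have "Re (hinner (A u) u) = 0" using normA_sq[OF A, of u] n by simp
  then have "(cmod (hinner (A u) (A u)))\<^sup>2 \<le> 0" using pos_CS[OF A, of u "A u"] by simp
  then show ?thesis using hinner_eq_zero[of "A u"] by simp
qed

lemma range_null_zero:
  assumes A: "positive_op A" and u: "u \<in> hclosure (range A)" and n: "A u = 0"
  shows "u = 0"
proof (rule hclosure_perp_zero[OF u])
  fix a assume "a \<in> range A"
  then obtain z where z: "a = A z" by blast
  show "hinner u a = 0" unfolding z using pos_sym[OF A, of u z] n by simp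
qed

lemma range_normA_pos:
  assumes A: "positive_op A" and u: "u \<in> hclosure (range A)" "u \<noteq> 0"
  shows "norm_A A u > 0"
proof -
  have "norm_A A u \<noteq> 0" using range_null_zero[OF A u(1)] pos_null[OF A, of u] u(2) by blast
  then show ?thesis using normA_nonneg[OF A, of u] by linarith
qed

abbreviation RA :: "('a::complex_hilbert \<Rightarrow> 'a) \<Rightarrow> 'a set" where
  "RA A \<equiv> hclosure (range A)"

lemma perp_null:
  assumes A: "positive_op A" and p: "\<And>z. z \<in> RA A \<Longrightarrow> hinner u z = 0"
  shows "A u = 0"
proof -
  have "hinner (A u) (A u) = 0"
    using p[OF in_hclosure[OF rangeI[of A "A u"]]] pos_sym[OF A, of u "A u"] by simp
  then show ?thesis using hinner_eq_zero[of "A u"] by simp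
qed

lemma proj_null:
  assumes A: "positive_op A" shows "A (x - proj (RA A) x) = 0"
  using perp_null[OF A] proj_prop(2)[OF csub_range[OF pos_bop[OF A]]] by blast

lemma sharp_pred_unique:
  assumes A: "positive_op A"
    and X1: "range X1 \<subseteq> RA A" and X2: "range X2 \<subseteq> RA A" and e: "A \<circ> X1 = A \<circ> X2"
  shows "X1 = X2"
proof
  fix y
  have b: "bounded_op A" using pos_bop[OF A] .
  have "X1 y \<in> RA A" "X2 y \<in> RA A" using X1 X2 by auto
  then have "X1 y - X2 y \<in> RA A" using csub_diff[OF csub_range[OF b]] by blast
  moreover have "A (X1 y - X2 y) = 0" using e by (simp add: bop_diff[OF b] fun_eq_iff)
  ultimately have "X1 y - X2 y = 0" using range_null_zero[OF A] by blast
  then show "X1 y = X2 y" by simp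
qed

lemma sharp_props:
  assumes A: "positive_op A" and S: "S \<in> BA A"
  shows "bounded_op (sharpA A S)" "A \<circ> sharpA A S = hadj S \<circ> A" "range (sharpA A S) \<subseteq> RA A"
proof -
  have b: "bounded_op A" using pos_bop[OF A] .
  have Sb: "bounded_op S" using S unfolding BA_def by blast
  obtain W where W: "bounded_op W" "\<And>x y. inner_A A (S x) y = inner_A A x (W y)"
    using S unfolding BA_def by blast
  have AW: "A (W y) = hadj S (A y)" for y
  proof (rule hinner_ext)
    fix x
    have "hinner x (A (W y)) = hinner (A x) (W y)" by (rule pos_sym[OF A])
    also have "\<dots> = hinner (A (S x)) y" using W(2) by (simp add: inner_A_def)
    also have "\<dots> = hinner (S x) (A y)" by (simp add: pos_sym[OF A])
    also have "\<dots> = hinner x (hadj S (A y))" by (rule hadj_prop(2)[OF Sb])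
    finally show "hinner x (A (W y)) = hinner x (hadj S (A y))" .
  qed
  define M where "M = RA A"
  have M: "csub M" unfolding M_def by (rule csub_range[OF b])
  define X where "X = (\<lambda>y. proj M (W y))"
  have Xb: "bounded_op X" unfolding X_def by (rule bop_comp[OF proj_bop[OF M] W(1)])
  have AX: "A \<circ> X = hadj S \<circ> A"
  proof
    fix y
    have "A (W y - proj M (W y)) = 0" unfolding M_def by (rule proj_null[OF A])
    then have "A (X y) = A (W y)" unfolding X_def by (simp add: bop_diff[OF b])
    then show "(A \<circ> X) y = (hadj S \<circ> A) y" using AW by simp
  qed
  have XR: "range X \<subseteq> RA A" unfolding X_def M_def[symmetric] using proj_prop(1)[OF M] by auto
  have "\<exists>!X. bounded_op X \<and> A \<circ> X = hadj S \<circ> A \<and> range X \<subseteq> RA A"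
  proof (rule ex_ex1I)
    show "\<exists>X. bounded_op X \<and> A \<circ> X = hadj S \<circ> A \<and> range X \<subseteq> RA A"
      by (intro exI[of _ X] conjI Xb AX XR)
    fix X1 X2 assume "bounded_op X1 \<and> A \<circ> X1 = hadj S \<circ> A \<and> range X1 \<subseteq> RA A"
      "bounded_op X2 \<and> A \<circ> X2 = hadj S \<circ> A \<and> range X2 \<subseteq> RA A"
    then have "range X1 \<subseteq> RA A" "range X2 \<subseteq> RA A" "A \<circ> X1 = A \<circ> X2" by auto
    then show "X1 = X2" by (rule sharp_pred_unique[OF A])
  qed
  then have "bounded_op (sharpA A S) \<and> A \<circ> sharpA A S = hadj S \<circ> A \<and> range (sharpA A S) \<subseteq> RA A"
    unfolding sharpA_def by (rule theI')
  then have P: "bounded_op (sharpA A S) \<and> A \<circ> sharpA A S = hadj S \<circ> A \<and> range (sharpA A S) \<subseteq> RA A" .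
  from P show "bounded_op (sharpA A S)" by (rule conjunct1)
  from P show "A \<circ> sharpA A S = hadj S \<circ> A" by (rule conjunct1[OF conjunct2])
  from P show "range (sharpA A S) \<subseteq> RA A" by (rule conjunct2[OF conjunct2])
qed

lemma sharp_adj1:
  assumes A: "positive_op A" and S: "S \<in> BA A"
  shows "inner_A A (S x) y = inner_A A x (sharpA A S y)"
proof -
  have Sb: "bounded_op S" using S unfolding BA_def by blast
  have "inner_A A (S x) y = hinner (S x) (A y)" by (simp add: inner_A_def pos_sym[OF A])
  also have "\<dots> = hinner x (hadj S (A y))" by (rule hadj_prop(2)[OF Sb])
  also have "\<dots> = hinner x (A (sharpA A S y))" using sharp_props(2)[OF A S] by (simp add: fun_eq_iff)
  also have "\<dots> = inner_A A x (sharpA A S y)" by (simp add: inner_A_def pos_sym[OF A])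
  finally show ?thesis .
qed

lemma sharp_adj2:
  assumes A: "positive_op A" and S: "S \<in> BA A"
  shows "inner_A A (sharpA A S x) y = inner_A A x (S y)"
proof -
  have "inner_A A (sharpA A S x) y = cnj (inner_A A y (sharpA A S x))"
    unfolding inner_A_def by (rule pos_herm[OF A])
  also have "\<dots> = cnj (inner_A A (S y) x)" by (simp add: sharp_adj1[OF A S])
  also have "\<dots> = inner_A A x (S y)" unfolding inner_A_def by (rule pos_herm[OF A, symmetric])
  finally show ?thesis .
qed

lemma sharp_char:
  assumes A: "positive_op A" and S: "S \<in> BA A" and X: "bounded_op X" "range X \<subseteq> RA A"
    and h: "\<And>x y. inner_A A (S x) y = inner_A A x (X y)"
  shows "sharpA A S = X"
proof -
  have "A (sharpA A S y) = A (X y)" for y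
  proof (rule hinner_ext)
    fix x
    have "hinner x (A (sharpA A S y)) = inner_A A x (sharpA A S y)" by (simp add: inner_A_def pos_sym[OF A])
    also have "\<dots> = inner_A A x (X y)" by (simp add: sharp_adj1[OF A S, symmetric] h)
    also have "\<dots> = hinner x (A (X y))" by (simp add: inner_A_def pos_sym[OF A])
    finally show "hinner x (A (sharpA A S y)) = hinner x (A (X y))" .
  qed
  then show ?thesis using sharp_pred_unique[OF A sharp_props(3)[OF A S] X(2)] by (simp add: fun_eq_iff)
qed

lemma bop_scaled: "bounded_op T \<Longrightarrow> bounded_op (\<lambda>x. hscale c (T x))"
proof -
  assume T: "bounded_op T"
  have "bounded_op (hscale c :: 'a \<Rightarrow> 'a)"
    unfolding bounded_op_def
    by (intro conjI allI exI[of _ "cmod c"]) (simp_all add: hscale_add_right hscale_hscale mult.commute hnorm_scale)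
  then show ?thesis using bop_comp[OF _ T] by blast
qed

lemma BA_scaled:
  assumes A: "positive_op A" and T: "T \<in> BA A"
  shows "(\<lambda>x. hscale c (T x)) \<in> BA A"
    and "sharpA A (\<lambda>x. hscale c (T x)) = (\<lambda>x. hscale (cnj c) (sharpA A T x))"
proof -
  have b: "bounded_op A" using pos_bop[OF A] .
  have Tb: "bounded_op T" using T unfolding BA_def by blast
  have h: "inner_A A (hscale c (T x)) y = inner_A A x (hscale (cnj c) (sharpA A T y))" for x y
    using sharp_adj1[OF A T, of x y] by (simp add: inner_A_def bop_scale[OF b] hinner_simps)
  show S: "(\<lambda>x. hscale c (T x)) \<in> BA A"
    unfolding BA_def using bop_scaled[OF Tb] bop_scaled[OF sharp_props(1)[OF A T]] h by blast
  show "sharpA A (\<lambda>x. hscale c (T x)) = (\<lambda>x. hscale (cnj c) (sharpA A T x))"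
  proof (rule sharp_char[OF A S])
    show "bounded_op (\<lambda>x. hscale (cnj c) (sharpA A T x))" by (rule bop_scaled[OF sharp_props(1)[OF A T]])
    show "range (\<lambda>x. hscale (cnj c) (sharpA A T x)) \<subseteq> RA A"
      using sharp_props(3)[OF A T] csub_scale[OF csub_range[OF b]] by blast
  qed (rule h)
qed



section \<open>Operators in B_A are A-bounded\<close>

lemma bop_funpow: "bounded_op B \<Longrightarrow> bounded_op (B ^^ k)"
proof (induction k)
  case 0 then show ?case using bop_id by (simp add: id_def)
next
  case (Suc k)
  then have "bounded_op (\<lambda>x. B ((B ^^ k) x))" using bop_comp by blast
  then show ?case by (simp add: o_def)
qed

lemma funpow_norm:
  fixes B :: "'a::complex_hilbert \<Rightarrow> 'a"
  assumes B: "\<And>x. hnorm (B x) \<le> M * hnorm x" and M: "M \<ge> 0"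
  shows "hnorm ((B ^^ k) x) \<le> M ^ k * hnorm x"
proof (induction k)
  case 0
  show ?case by simp
next
  case (Suc k)
  have "hnorm ((B ^^ Suc k) x) \<le> M * hnorm ((B ^^ k) x)" using B by simp
  also have "\<dots> \<le> M * (M ^ k * hnorm x)" using Suc M by (simp add: mult_left_mono)
  finally show ?case by (simp add: mult.assoc)
qed

lemma normA_le_hnorm:
  assumes A: "positive_op A"
  shows "\<exists>C\<ge>0. \<forall>y. norm_A A y \<le> C * hnorm y"
proof -
  obtain K where K: "K > 0" "\<And>x. hnorm (A x) \<le> K * hnorm x" using bop_bound[OF pos_bop[OF A]] by blast
  have "norm_A A y \<le> sqrt K * hnorm y" for y
  proof -
    have "(norm_A A y)\<^sup>2 = Re (hinner (A y) y)" by (rule normA_sq[OF A])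
    also have "\<dots> \<le> cmod (hinner (A y) y)" by (rule complex_Re_le_cmod)
    also have "\<dots> \<le> hnorm (A y) * hnorm y" by (rule hnorm_CS)
    also have "\<dots> \<le> K * hnorm y * hnorm y" using K by (simp add: mult_right_mono)
    also have "\<dots> = (sqrt K * hnorm y)\<^sup>2" using K by (simp add: power2_eq_square power_mult_distrib)
    finally show ?thesis by (rule power2_le_imp_le) (simp add: K(1) less_imp_le)
  qed
  then show ?thesis using K by (intro exI[of _ "sqrt K"]) auto
qed

lemma BA_Abounded:
  assumes A: "positive_op A" and T: "T \<in> BA A"
  shows "\<exists>c\<ge>0. \<forall>x. norm_A A (T x) \<le> c * norm_A A x"
proof -
  define Ts where "Ts = sharpA A T"
  define B where "B = (\<lambda>x. Ts (T x))"
  have Tb: "bounded_op T" using T unfolding BA_def by blast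
  have Bb: "bounded_op B" unfolding B_def Ts_def by (rule bop_comp[OF sharp_props(1)[OF A T] Tb])
  obtain M where M: "M > 0" "\<And>x. hnorm (B x) \<le> M * hnorm x" using bop_bound[OF Bb] by blast
  obtain C where C: "C \<ge> 0" "\<And>y. norm_A A y \<le> C * hnorm y" using normA_le_hnorm[OF A] by blast
  have Bip: "inner_A A (B u) v = inner_A A (T u) (T v)" for u v
    unfolding B_def Ts_def by (rule sharp_adj2[OF A T])
  have Bsym: "inner_A A (B u) v = inner_A A u (B v)" for u v
  proof -
    have "inner_A A u (B v) = cnj (inner_A A (B v) u)" unfolding inner_A_def by (rule pos_herm[OF A])
    also have "\<dots> = cnj (inner_A A (T v) (T u))" by (simp add: Bip)
    also have "\<dots> = inner_A A (T u) (T v)" unfolding inner_A_def by (simp add: pos_herm[OF A, of "T u" "T v"])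
    finally show ?thesis by (simp add: Bip)
  qed
  have Bksym: "inner_A A ((B ^^ k) u) v = inner_A A u ((B ^^ k) v)" for k u v
  proof (induction k arbitrary: u v)
    case 0 then show ?case by simp
  next
    case (Suc k)
    have "inner_A A ((B ^^ Suc k) u) v = inner_A A (B ((B ^^ k) u)) v" by simp
    also have "\<dots> = inner_A A ((B ^^ k) u) (B v)" by (rule Bsym)
    also have "\<dots> = inner_A A u ((B ^^ k) (B v))" by (rule Suc)
    also have "(B ^^ k) (B v) = (B ^^ Suc k) v" by (simp add: funpow_swap1)
    finally show ?case .
  qed
  have Bnorm: "norm_A A (B x) \<le> M * norm_A A x" for x
  proof -
    define a0 where "a0 = norm_A A x"
    define b where "b n = norm_A A ((B ^^ (2 ^ n)) x)" for n
    have a0n: "a0 \<ge> 0" unfolding a0_def using normA_nonneg[OF A] .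
    have bn: "b n \<ge> 0" for n unfolding b_def using normA_nonneg[OF A] .
    have step: "(b n)\<^sup>2 \<le> a0 * b (Suc n)" for n
    proof -
      let ?m = "2 ^ n :: nat"
      have "of_real ((b n)\<^sup>2) = inner_A A ((B ^^ ?m) x) ((B ^^ ?m) x)"
        unfolding b_def by (rule innerA_self[OF A, symmetric])
      also have "\<dots> = inner_A A x ((B ^^ ?m) ((B ^^ ?m) x))" by (rule Bksym)
      also have "(B ^^ ?m) ((B ^^ ?m) x) = (B ^^ (2 ^ Suc n)) x"
        by (simp add: funpow_add mult_2)
      finally have "(b n)\<^sup>2 = cmod (inner_A A x ((B ^^ (2 ^ Suc n)) x))"
        by (metis norm_of_real abs_of_nonneg zero_le_power2)
      also have "\<dots> \<le> a0 * b (Suc n)" unfolding a0_def b_def by (rule pos_CS2[OF A])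
      finally show ?thesis .
    qed
    have b0: "b 0 = norm_A A (B x)" unfolding b_def by simp
    have bbound: "b n \<le> C * hnorm x * M ^ (2 ^ n)" for n
    proof -
      have "b n \<le> C * hnorm ((B ^^ (2 ^ n)) x)" unfolding b_def by (rule C(2))
      also have "\<dots> \<le> C * (M ^ (2 ^ n) * hnorm x)"
        using funpow_norm[OF M(2)] M(1) C(1) by (simp add: mult_left_mono less_imp_le)
      finally show ?thesis by (simp add: algebra_simps)
    qed
    show ?thesis
    proof (cases "a0 = 0")
      case True
      then have "(b 0)\<^sup>2 \<le> 0" using step[of 0] by simp
      then have "b 0 = 0" by simp
      then show ?thesis using b0 True a0_def M by simp
    next
      case False
      then have a0p: "a0 > 0" using a0n by simp
      have ind: "(b 0) ^ (2 ^ n) * a0 \<le> a0 ^ (2 ^ n) * b n" for n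
      proof (induction n)
        case 0 then show ?case by (simp add: mult.commute)
      next
        case (Suc n)
        have l: "0 \<le> (b 0) ^ (2 ^ n) * a0" using bn a0n by simp
        have "((b 0) ^ (2 ^ n) * a0)\<^sup>2 \<le> (a0 ^ (2 ^ n) * b n)\<^sup>2"
          using power_mono[OF Suc l] by simp
        also have "\<dots> = (a0 ^ (2 ^ n))\<^sup>2 * (b n)\<^sup>2" by (simp add: power_mult_distrib)
        also have "\<dots> \<le> (a0 ^ (2 ^ n))\<^sup>2 * (a0 * b (Suc n))"
          using step[of n] by (simp add: mult_left_mono)
        finally have X: "((b 0) ^ (2 ^ n) * a0)\<^sup>2 \<le> (a0 ^ (2 ^ n))\<^sup>2 * (a0 * b (Suc n))" .
        have e1: "(b 0) ^ (2 ^ Suc n) = (b 0) ^ (2 ^ n) * (b 0) ^ (2 ^ n)" by (simp add: mult_2 power_add)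
        have e2: "a0 ^ (2 ^ Suc n) = a0 ^ (2 ^ n) * a0 ^ (2 ^ n)" by (simp add: mult_2 power_add)
        have "a0 * ((b 0) ^ (2 ^ Suc n) * a0) \<le> a0 * (a0 ^ (2 ^ Suc n) * b (Suc n))"
          using X unfolding e1 e2 by (simp add: power2_eq_square algebra_simps)
        then show ?case using a0p by simp
      qed
      show ?thesis
      proof (rule ccontr)
        assume "\<not> ?thesis"
        then have gt: "b 0 > M * a0" using b0 a0_def by simp
        define r where "r = b 0 / (M * a0)"
        have r1: "r > 1" unfolding r_def using gt M a0p by simp
        obtain n where n: "(C * hnorm x + 1) / a0 < r ^ n" using real_arch_pow[OF r1] by blast
        have "r ^ n \<le> r ^ (2 ^ n)" using r1 by (intro power_increasing) (auto simp: less_imp_le)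
        also have "r ^ (2 ^ n) * (M ^ (2 ^ n) * a0 ^ (2 ^ n) * a0) = (b 0) ^ (2 ^ n) * a0"
          unfolding r_def using M a0p by (simp add: power_divide power_mult_distrib)
        then have "r ^ (2 ^ n) * (M ^ (2 ^ n) * a0 ^ (2 ^ n) * a0) \<le> a0 ^ (2 ^ n) * (C * hnorm x * M ^ (2 ^ n))"
          using ind[of n] bbound[of n] a0p by (smt (verit) mult_left_mono zero_le_power)
        then have "r ^ (2 ^ n) * a0 \<le> C * hnorm x"
          using M a0p by (simp add: algebra_simps)
        then have "r ^ (2 ^ n) \<le> C * hnorm x / a0" using a0p by (simp add: le_divide_eq)
        finally have "r ^ n \<le> C * hnorm x / a0" .
        moreover have "C * hnorm x / a0 < (C * hnorm x + 1) / a0" using a0p by (simp add: divide_strict_right_mono)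
        ultimately show False using n by simp
      qed
    qed
  qed
  have "norm_A A (T x) \<le> sqrt M * norm_A A x" for x
  proof -
    have "of_real ((norm_A A (T x))\<^sup>2) = inner_A A (T x) (T x)" by (rule innerA_self[OF A, symmetric])
    also have "\<dots> = inner_A A (B x) x" by (simp add: Bip)
    finally have "(norm_A A (T x))\<^sup>2 = Re (inner_A A (B x) x)" by (metis Re_complex_of_real)
    also have "\<dots> \<le> cmod (inner_A A (B x) x)" by (rule complex_Re_le_cmod)
    also have "\<dots> \<le> norm_A A (B x) * norm_A A x" by (rule pos_CS2[OF A])
    also have "\<dots> \<le> M * norm_A A x * norm_A A x" using Bnorm normA_nonneg[OF A] by (simp add: mult_right_mono)
    also have "\<dots> = (sqrt M * norm_A A x)\<^sup>2" using M by (simp add: power2_eq_square power_mult_distrib)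
    finally show ?thesis by (rule power2_le_imp_le) (simp add: M(1) less_imp_le normA_nonneg[OF A])
  qed
  then show ?thesis using M by (intro exI[of _ "sqrt M"]) auto
qed



lemma innerA_add_left: "positive_op A \<Longrightarrow> inner_A A (x + y) z = inner_A A x z + inner_A A y z"
  unfolding inner_A_def by (simp add: bop_add[OF pos_bop] hinner_simps)
lemma innerA_add_right: "inner_A A z (x + y) = inner_A A z x + inner_A A z y"
  unfolding inner_A_def by (simp add: hinner_simps)
lemma innerA_diff_left: "positive_op A \<Longrightarrow> inner_A A (x - y) z = inner_A A x z - inner_A A y z"
  unfolding inner_A_def by (simp add: bop_diff[OF pos_bop] hinner_simps)
lemma innerA_diff_right: "inner_A A z (x - y) = inner_A A z x - inner_A A z y"
  unfolding inner_A_def by (simp add: hinner_simps)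
lemma innerA_scale_left: "positive_op A \<Longrightarrow> inner_A A (hscale a x) z = a * inner_A A x z"
  unfolding inner_A_def by (simp add: bop_scale[OF pos_bop] hinner_simps)
lemma innerA_scale_right: "inner_A A z (hscale a x) = cnj a * inner_A A z x"
  unfolding inner_A_def by (simp add: hinner_simps)
lemma innerA_herm: "positive_op A \<Longrightarrow> inner_A A y x = cnj (inner_A A x y)"
  unfolding inner_A_def by (rule pos_herm)

lemmas innerA_L = innerA_add_left innerA_diff_left innerA_scale_left
lemmas innerA_R = innerA_add_right innerA_diff_right innerA_scale_right

lemma normA_parallelogram:
  assumes A: "positive_op A"
  shows "(norm_A A (x + y))\<^sup>2 + (norm_A A (x - y))\<^sup>2 = 2 * (norm_A A x)\<^sup>2 + 2 * (norm_A A y)\<^sup>2"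
proof -
  have "inner_A A (x + y) (x + y) + inner_A A (x - y) (x - y) = 2 * inner_A A x x + 2 * inner_A A y y"
    by (simp add: innerA_L[OF A] innerA_R algebra_simps)
  from arg_cong[where f=Re, OF this] show ?thesis by (simp add: innerA_self[OF A])
qed

lemma null_normA: "positive_op A \<Longrightarrow> A y = 0 \<Longrightarrow> norm_A A y = 0"
  unfolding norm_A_def inner_A_def by simp

section \<open>Polarization\<close>

lemma pol:
  assumes A: "positive_op A" and Rb: "bounded_op R"
    and sym: "\<And>u v. inner_A A (R u) v = inner_A A u (R v)"
    and bnd: "\<And>z. cmod (inner_A A (R z) z) \<le> w * (norm_A A z)\<^sup>2"
    and ax: "norm_A A x > 0"
  shows "norm_A A (R x) \<le> w * norm_A A x"
proof -
  define a where "a = norm_A A x"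
  define r where "r = norm_A A (R x)"
  have ap: "a > 0" using ax a_def by simp
  have "0 \<le> w * a\<^sup>2" using bnd[of x] a_def by (meson norm_ge_zero order_trans)
  then have w0: "w \<ge> 0" using ap by (simp add: zero_le_mult_iff)
  show ?thesis
  proof (cases "r = 0")
    case True then show ?thesis using w0 ap r_def a_def by simp
  next
    case False
    then have rp: "r > 0" using normA_nonneg[OF A] r_def by (metis less_eq_real_def)
    define y where "y = hscale (of_real (a / r)) (R x)"
    have ip: "inner_A A (R x) y = of_real (a * r)"
      unfolding y_def using rp by (simp add: innerA_scale_right innerA_self[OF A] r_def power2_eq_square)
    have c: "cmod (of_real (a / r) :: complex) = a / r" using ap rp by (subst norm_of_real) simp
    have ny: "norm_A A y = a" unfolding y_def using rp ap c by (simp add: normA_scale[OF A] r_def[symmetric])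
    have ry: "inner_A A (R y) x = of_real (a * r)"
    proof -
      have "inner_A A (R y) x = inner_A A y (R x)" by (rule sym)
      also have "\<dots> = cnj (inner_A A (R x) y)" by (rule innerA_herm[OF A])
      finally show ?thesis using ip by simp
    qed
    have "inner_A A (R (x + y)) (x + y) - inner_A A (R (x - y)) (x - y)
        = 2 * (inner_A A (R x) y + inner_A A (R y) x)"
      by (simp add: bop_add[OF Rb] bop_diff[OF Rb] innerA_L[OF A] innerA_R algebra_simps)
    also have "\<dots> = of_real (4 * a * r)" using ip ry by simp
    finally have e: "of_real (4 * a * r) = inner_A A (R (x + y)) (x + y) - inner_A A (R (x - y)) (x - y)" by simp
    have "4 * a * r = cmod (of_real (4 * a * r) :: complex)" using ap rp by (subst norm_of_real) simp
    also have "\<dots> \<le> cmod (inner_A A (R (x + y)) (x + y)) + cmod (inner_A A (R (x - y)) (x - y))"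
      unfolding e by (rule norm_triangle_ineq4)
    also have "\<dots> \<le> w * (norm_A A (x + y))\<^sup>2 + w * (norm_A A (x - y))\<^sup>2" using bnd by (intro add_mono)
    also have "\<dots> = w * (2 * a\<^sup>2 + 2 * a\<^sup>2)"
      using normA_parallelogram[OF A, of x y] ny a_def by (simp add: distrib_left[symmetric])
    finally have "4 * a * r \<le> 4 * a * (w * a)" by (simp add: power2_eq_square algebra_simps)
    then show ?thesis using ap r_def a_def by simp
  qed
qed

lemma opnorm_props:
  assumes A: "positive_op A" and Xb: "bounded_op X"
    and nul: "\<And>y. A y = 0 \<Longrightarrow> norm_A A (X y) = 0"
    and bnd: "\<And>x. x \<in> RA A \<Longrightarrow> x \<noteq> 0 \<Longrightarrow> norm_A A (X x) \<le> k * norm_A A x"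
    and ne: "u0 \<in> RA A" "u0 \<noteq> 0"
  shows "0 \<le> opnorm_A A X" "opnorm_A A X \<le> k" "\<And>y. norm_A A (X y) \<le> opnorm_A A X * norm_A A y"
proof -
  define D where "D = {norm_A A (X x) / norm_A A x | x. x \<in> RA A \<and> x \<noteq> 0}"
  have o: "opnorm_A A X = Sup D" unfolding opnorm_A_def D_def ..
  have Dne: "D \<noteq> {}" using ne unfolding D_def by blast
  have Dk: "d \<le> k" if dD: "d \<in> D" for d
  proof -
    obtain x where x: "d = norm_A A (X x) / norm_A A x" "x \<in> RA A" "x \<noteq> 0" using dD D_def by blast
    have p: "norm_A A x > 0" by (rule range_normA_pos[OF A x(2,3)])
    show ?thesis using bnd[OF x(2,3)] p x(1) by (simp add: divide_le_eq)
  qed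
  have Dbdd: "bdd_above D" using Dk by (intro bdd_aboveI) auto
  have D0: "d \<ge> 0" if "d \<in> D" for d using that normA_nonneg[OF A] unfolding D_def by auto
  have up: "norm_A A (X x) \<le> Sup D * norm_A A x" if x: "x \<in> RA A" "x \<noteq> 0" for x
  proof -
    have p: "norm_A A x > 0" by (rule range_normA_pos[OF A x])
    have "norm_A A (X x) / norm_A A x \<in> D" using x D_def by blast
    then have "norm_A A (X x) / norm_A A x \<le> Sup D" using Dbdd by (rule cSup_upper)
    then show ?thesis using p by (simp add: divide_le_eq)
  qed
  have s0: "0 \<le> Sup D"
  proof -
    obtain d where "d \<in> D" using Dne by blast
    then show ?thesis using D0 Dbdd cSup_upper by (meson order_trans)
  qed
  show "0 \<le> opnorm_A A X" using s0 o by simp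
  show "opnorm_A A X \<le> k" unfolding o using Dne Dk by (rule cSup_least)
  fix y
  have b: "bounded_op A" using pos_bop[OF A] .
  define p where "p = proj (RA A) y"
  have pR: "p \<in> RA A" unfolding p_def using proj_prop(1)[OF csub_range[OF b]] .
  have n0: "A (y - p) = 0" unfolding p_def by (rule proj_null[OF A])
  have "norm_A A (X y) \<le> norm_A A (X p) + norm_A A (X (y - p))"
    using normA_triangle[OF A, of "X p" "X (y - p)"] by (simp add: bop_diff[OF Xb])
  also have "norm_A A (X (y - p)) = 0" using nul[OF n0] .
  finally have 1: "norm_A A (X y) \<le> norm_A A (X p)" by simp
  have "norm_A A y \<le> norm_A A p + norm_A A (y - p)" using normA_triangle[OF A, of p "y - p"] by simp
  moreover have "norm_A A p \<le> norm_A A y + norm_A A (y - p)"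
    using normA_diff_triangle[OF A, of y "y - p"] by simp
  moreover have "norm_A A (y - p) = 0" using null_normA[OF A n0] .
  ultimately have 2: "norm_A A y = norm_A A p" by simp
  show "norm_A A (X y) \<le> opnorm_A A X * norm_A A y"
  proof (cases "p = 0")
    case True
    then show ?thesis using 1 bop_zero[OF Xb] null_normA[OF A, of 0] bop_zero[OF b] s0 o 2
      by (simp add: normA_nonneg[OF A])
  next
    case False
    then show ?thesis using up[OF pR False] 1 2 o by simp
  qed
qed

lemma BA_null:
  assumes A: "positive_op A" and S: "S \<in> BA A" and y: "A y = 0"
  shows "norm_A A (S y) = 0" "norm_A A (sharpA A S y) = 0"
proof -
  have "inner_A A (S y) (S y) = inner_A A y (sharpA A S (S y))" by (rule sharp_adj1[OF A S])
  also have "\<dots> = 0" unfolding inner_A_def using y by simp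
  finally show "norm_A A (S y) = 0" using innerA_self[OF A, of "S y"] by simp
  have "A (sharpA A S y) = hadj S (A y)" using sharp_props(2)[OF A S] by (simp add: fun_eq_iff)
  also have "\<dots> = 0" using y bop_zero[OF hadj_prop(1)] S unfolding BA_def by auto
  finally show "norm_A A (sharpA A S y) = 0" by (rule null_normA[OF A])
qed



section \<open>q-numerical radius lower bound\<close>

lemma normA_one_iff:
  assumes A: "positive_op A" shows "norm_A A y = 1 \<longleftrightarrow> inner_A A y y = 1"
proof -
  have e: "inner_A A y y = of_real ((norm_A A y)\<^sup>2)" by (rule innerA_self[OF A])
  have "inner_A A y y = 1 \<longleftrightarrow> (norm_A A y)\<^sup>2 = 1" unfolding e by (simp only: of_real_eq_1_iff)
  moreover have "(norm_A A y)\<^sup>2 = 1 \<longleftrightarrow> norm_A A y = 1" using normA_nonneg[OF A, of y]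
    by (auto simp: power2_eq_1_iff)
  ultimately show ?thesis by simp
qed

lemma orth_unit:
  assumes A: "positive_op A" and dim: "range_dim_ge_2 A" and x: "norm_A A x = 1"
  shows "\<exists>z. norm_A A z = 1 \<and> inner_A A x z = 0"
proof -
  have b: "bounded_op A" using pos_bop[OF A] .
  have xx: "inner_A A x x = 1" using x normA_one_iff[OF A] by simp
  obtain u v where uv: "u \<in> range A" "v \<in> range A"
    and ind: "\<And>a b. hscale a u + hscale b v = 0 \<Longrightarrow> a = 0 \<and> b = 0"
    using dim unfolding range_dim_ge_2_def by blast
  define g where "g w = w - hscale (inner_A A w x) x" for w
  have gx: "inner_A A (g w) x = 0" for w
    unfolding g_def by (simp add: innerA_L[OF A] xx)
  have good: "\<exists>z. norm_A A z = 1 \<and> inner_A A x z = 0" if nz: "norm_A A (g w) \<noteq> 0" for w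
  proof -
    define n where "n = norm_A A (g w)"
    have np: "n > 0" using nz normA_nonneg[OF A, of "g w"] n_def by linarith
    define z where "z = hscale (of_real (1 / n)) (g w)"
    have c: "cmod (of_real (1 / n) :: complex) = 1 / n" using np by (subst norm_of_real) simp
    have "norm_A A z = 1" unfolding z_def using np c by (simp add: normA_scale[OF A] n_def[symmetric])
    moreover have "inner_A A x z = 0"
    proof -
      have "inner_A A x (g w) = cnj (inner_A A (g w) x)" by (rule innerA_herm[OF A])
      then show ?thesis unfolding z_def using gx by (simp add: innerA_R)
    qed
    ultimately show ?thesis by blast
  qed
  show ?thesis
  proof (rule ccontr)
    assume "\<not> ?thesis"
    then have "norm_A A (g u) = 0" "norm_A A (g v) = 0" using good[of u] good[of v] by blast+
    then have nu: "A (g u) = 0" and nv: "A (g v) = 0" using pos_null[OF A] by simp_all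
    define \<alpha> where "\<alpha> = inner_A A u x"
    define \<beta> where "\<beta> = inner_A A v x"
    have Au: "A u = hscale \<alpha> (A x)" using nu unfolding g_def \<alpha>_def by (simp add: bop_diff[OF b] bop_scale[OF b])
    have Av: "A v = hscale \<beta> (A x)" using nv unfolding g_def \<beta>_def by (simp add: bop_diff[OF b] bop_scale[OF b])
    define c where "c = hscale \<beta> u + hscale (- \<alpha>) v"
    have Ac: "A c = 0" unfolding c_def
      by (simp add: bop_add[OF b] bop_diff[OF b] bop_scale[OF b] Au Av hscale_hscale hscale_minus_left mult.commute)
    obtain u0 v0 where u0: "u = A u0" and v0: "v = A v0" using uv by blast
    have "c = A (hscale \<beta> u0 + hscale (- \<alpha>) v0)" unfolding c_def u0 v0 by (simp add: bop_add[OF b] bop_scale[OF b])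
    then have "c \<in> RA A" by (intro in_hclosure) simp
    then have "c = 0" using range_null_zero[OF A] Ac by simp
    then have "\<beta> = 0 \<and> - \<alpha> = 0" using ind[of \<beta> "- \<alpha>"] unfolding c_def by simp
    then have "A u = 0" using Au by simp
    moreover have "u \<in> RA A" using uv(1) by (rule in_hclosure)
    ultimately have "u = 0" using range_null_zero[OF A] by simp
    then have "hscale 1 u + hscale 0 v = 0" by simp
    then show False using ind[of 1 0] by simp
  qed
qed

lemma wq_lower:
  assumes A: "positive_op A" and dim: "range_dim_ge_2 A" and T: "T \<in> BA A"
    and q: "cmod q \<le> 1" and x: "norm_A A x = 1"
  shows "cmod q * cmod (inner_A A (T x) x) \<le> wqA q A T"
proof -
  obtain c where c: "c \<ge> 0" "\<And>x. norm_A A (T x) \<le> c * norm_A A x" using BA_Abounded[OF A T] by blast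
  define W where "W = {cmod (inner_A A (T x) y) | x y.
      norm_A A x = 1 \<and> norm_A A y = 1 \<and> inner_A A x y = q}"
  have wq: "wqA q A T = Sup W" unfolding wqA_def W_def ..
  have Wb: "bdd_above W"
  proof (rule bdd_aboveI)
    fix w assume "w \<in> W"
    then obtain x y where xy: "w = cmod (inner_A A (T x) y)" "norm_A A x = 1" "norm_A A y = 1"
      unfolding W_def by blast
    have "w \<le> norm_A A (T x) * norm_A A y" using xy(1) pos_CS2[OF A] by simp
    also have "\<dots> \<le> c" using c(2)[of x] xy(2,3) by simp
    finally show "w \<le> c" .
  qed
  obtain z where z: "norm_A A z = 1" "inner_A A x z = 0" using orth_unit[OF A dim x] by blast
  have xx: "inner_A A x x = 1" using x normA_one_iff[OF A] by simp
  have zz: "inner_A A z z = 1" using z(1) normA_one_iff[OF A] by simp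
  have zx: "inner_A A z x = 0" using innerA_herm[OF A, of z x] z(2) by simp
  define s where "s = sqrt (1 - (cmod q)\<^sup>2)"
  have "(cmod q)\<^sup>2 \<le> 1" using q by (simp add: power_le_one)
  then have s2: "s\<^sup>2 = 1 - (cmod q)\<^sup>2" unfolding s_def by simp
  have mem: "cmod (q * inner_A A (T x) x + of_real t * inner_A A (T x) z) \<in> W" if t: "t\<^sup>2 = s\<^sup>2" for t :: real
  proof -
    define y where "y = hscale (cnj q) x + hscale (of_real t) z"
    have "inner_A A x y = q" unfolding y_def by (simp add: innerA_R xx z(2))
    moreover have "norm_A A y = 1"
    proof -
      have "inner_A A y y = cnj q * q + of_real t * of_real t"
        unfolding y_def by (simp add: innerA_L[OF A] innerA_R xx zz z(2) zx algebra_simps)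
      also have "cnj q * q = of_real ((cmod q)\<^sup>2)" using complex_norm_square[of q] by (simp add: mult.commute)
      also have "of_real ((cmod q)\<^sup>2) + of_real t * of_real t = (of_real ((cmod q)\<^sup>2 + t\<^sup>2) :: complex)"
        by (simp add: power2_eq_square)
      also have "(cmod q)\<^sup>2 + t\<^sup>2 = 1" using t s2 by simp
      finally show ?thesis using normA_one_iff[OF A] by simp
    qed
    moreover have "inner_A A (T x) y = q * inner_A A (T x) x + of_real t * inner_A A (T x) z"
      unfolding y_def by (simp add: innerA_R)
    ultimately show ?thesis unfolding W_def using x
      by (intro CollectI exI[of _ x] exI[of _ y]) simp
  qed
  define P where "P = q * inner_A A (T x) x"
  define Q where "Q = of_real s * inner_A A (T x) z"
  have m1: "cmod (P + Q) \<in> W" using mem[of s] unfolding P_def Q_def by simp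
  have m2: "cmod (P - Q) \<in> W" using mem[of "- s"] unfolding P_def Q_def by simp
  have "2 * cmod P = cmod ((P + Q) + (P - Q))" by (simp add: norm_mult[symmetric])
  also have "\<dots> \<le> cmod (P + Q) + cmod (P - Q)" by (rule norm_triangle_ineq)
  also have "\<dots> \<le> Sup W + Sup W" using m1 m2 Wb by (intro add_mono cSup_upper)
  finally have "cmod P \<le> Sup W" by simp
  then show ?thesis unfolding P_def wq by (simp add: norm_mult)
qed



lemma bop_plus: "bounded_op X \<Longrightarrow> bounded_op Y \<Longrightarrow> bounded_op (\<lambda>x. X x + Y x)"
proof -
  assume X: "bounded_op X" and Y: "bounded_op Y"
  obtain K1 where K1: "\<And>x. hnorm (X x) \<le> K1 * hnorm x" using bop_bound[OF X] by blast
  obtain K2 where K2: "\<And>x. hnorm (Y x) \<le> K2 * hnorm x" using bop_bound[OF Y] by blast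
  have "hnorm (X x + Y x) \<le> (K1 + K2) * hnorm x" for x
    using hnorm_triangle[of "X x" "Y x"] K1[of x] K2[of x] by (simp add: algebra_simps)
  then show ?thesis unfolding bounded_op_def
    using bop_add[OF X] bop_add[OF Y] bop_scale[OF X] bop_scale[OF Y]
    by (intro conjI allI exI[of _ "K1 + K2"]) (auto simp: hscale_add_right algebra_simps)
qed

lemma bop_minus_ops: "bounded_op X \<Longrightarrow> bounded_op Y \<Longrightarrow> bounded_op (\<lambda>x. X x - Y x)"
proof -
  assume X: "bounded_op X" and Y: "bounded_op Y"
  have "bounded_op (\<lambda>x. hscale (-1) (Y x))" by (rule bop_scaled[OF Y])
  then have "bounded_op (\<lambda>x. X x + hscale (-1) (Y x))" by (rule bop_plus[OF X])
  then show ?thesis by simp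
qed

lemma ReIm_props:
  assumes A: "positive_op A" and S: "S \<in> BA A"
  shows "bounded_op (ReA A S)" "bounded_op (ImA A S)"
    "\<And>u v. inner_A A (ReA A S u) v = inner_A A u (ReA A S v)"
    "\<And>u v. inner_A A (ImA A S u) v = inner_A A u (ImA A S v)"
    "\<And>z. cmod (inner_A A (ReA A S z) z) \<le> cmod (inner_A A (S z) z)"
    "\<And>z. cmod (inner_A A (ImA A S z) z) \<le> cmod (inner_A A (S z) z)"
    "\<And>y. A y = 0 \<Longrightarrow> norm_A A (ReA A S y) = 0"
    "\<And>y. A y = 0 \<Longrightarrow> norm_A A (ImA A S y) = 0"
    "\<And>x. ReA A S (ReA A S x) + ImA A S (ImA A S x) = hscale (1/2) (S (sharpA A S x) + sharpA A S (S x))"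
proof -
  define Ss where "Ss = sharpA A S"
  have Sb: "bounded_op S" using S unfolding BA_def by blast
  have Ssb: "bounded_op Ss" unfolding Ss_def by (rule sharp_props(1)[OF A S])
  have a1: "inner_A A (S x) y = inner_A A x (Ss y)" for x y unfolding Ss_def by (rule sharp_adj1[OF A S])
  have a2: "inner_A A (Ss x) y = inner_A A x (S y)" for x y unfolding Ss_def by (rule sharp_adj2[OF A S])
  have R: "ReA A S = (\<lambda>x. hscale (1/2) (S x + Ss x))" unfolding ReA_def Ss_def ..
  have I: "ImA A S = (\<lambda>x. hscale (1 / (2 * \<i>)) (S x - Ss x))" unfolding ImA_def Ss_def ..
  show "bounded_op (ReA A S)" unfolding R by (intro bop_scaled bop_plus Sb Ssb)
  show "bounded_op (ImA A S)" unfolding I by (intro bop_scaled bop_minus_ops Sb Ssb)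
  show "inner_A A (ReA A S u) v = inner_A A u (ReA A S v)" for u v
    unfolding R by (simp add: innerA_L[OF A] innerA_R a1 a2 algebra_simps)
  show "inner_A A (ImA A S u) v = inner_A A u (ImA A S v)" for u v
    unfolding I by (simp add: innerA_L[OF A] innerA_R a1 a2 algebra_simps)
  show "cmod (inner_A A (ReA A S z) z) \<le> cmod (inner_A A (S z) z)" for z
  proof -
    define w where "w = inner_A A (S z) z"
    have h: "inner_A A (Ss z) z = cnj w" unfolding w_def a2 by (rule innerA_herm[OF A])
    have "inner_A A (ReA A S z) z = (w + cnj w) / 2"
      unfolding R by (simp add: innerA_L[OF A] h w_def[symmetric])
    also have "\<dots> = of_real (Re w)" by (simp add: complex_add_cnj)
    finally show ?thesis by (simp add: abs_Re_le_cmod w_def[symmetric])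
  qed
  show "cmod (inner_A A (ImA A S z) z) \<le> cmod (inner_A A (S z) z)" for z
  proof -
    define w where "w = inner_A A (S z) z"
    have h: "inner_A A (Ss z) z = cnj w" unfolding w_def a2 by (rule innerA_herm[OF A])
    have "inner_A A (ImA A S z) z = (w - cnj w) / (2 * \<i>)"
      unfolding I by (simp add: innerA_L[OF A] h w_def[symmetric])
    also have "\<dots> = of_real (Im w)"
    proof -
      have "w - cnj w = of_real (Im w) * (2 * \<i>)" by (simp add: complex_eq_iff)
      then show ?thesis by (simp add: complex_eq_iff)
    qed
    finally show ?thesis by (simp add: abs_Im_le_cmod w_def[symmetric])
  qed
  show "norm_A A (ReA A S y) = 0" if y: "A y = 0" for y
  proof -
    have "norm_A A (ReA A S y) \<le> cmod (1/2) * (norm_A A (S y) + norm_A A (Ss y))"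
      unfolding R by (simp add: normA_scale[OF A] normA_triangle[OF A])
    then show ?thesis using BA_null[OF A S y] normA_nonneg[OF A, of "ReA A S y"] Ss_def by simp
  qed
  show "norm_A A (ImA A S y) = 0" if y: "A y = 0" for y
  proof -
    have "norm_A A (ImA A S y) \<le> cmod (1 / (2 * \<i>)) * (norm_A A (S y) + norm_A A (Ss y))"
      unfolding I by (simp only: normA_scale[OF A]) (intro mult_left_mono normA_diff_triangle[OF A]; simp)
    then show ?thesis using BA_null[OF A S y] normA_nonneg[OF A, of "ImA A S y"] Ss_def by simp
  qed
  show "ReA A S (ReA A S x) + ImA A S (ImA A S x) = hscale (1/2) (S (sharpA A S x) + sharpA A S (S x))" for x
    unfolding R I Ss_def[symmetric]
  proof (rule hinner_ext)
    fix z
    show "hinner z (hscale (1 / 2) (S (hscale (1 / 2) (S x + Ss x)) + Ss (hscale (1 / 2) (S x + Ss x))) +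
          hscale (1 / (2 * \<i>)) (S (hscale (1 / (2 * \<i>)) (S x - Ss x)) - Ss (hscale (1 / (2 * \<i>)) (S x - Ss x)))) =
          hinner z (hscale (1 / 2) (S (Ss x) + Ss (S x)))"
      by (simp add: bop_add[OF Sb] bop_add[OF Ssb] bop_diff[OF Sb] bop_diff[OF Ssb]
          bop_scale[OF Sb] bop_scale[OF Ssb] hinner_simps field_simps)
  qed
qed



theorem mainTheorem2:
  fixes A T :: "'a::complex_hilbert \<Rightarrow> 'a" and q :: complex
  assumes "positive_op A"
    and "range_dim_ge_2 A"
    and "T \<in> BA A"
    and "cmod q \<le> 1"
    and "(wqA q A T)\<^sup>2 = (cmod q)\<^sup>2 / 4 * opnorm_A A (\<lambda>x. sharpA A T (T x) + T (sharpA A T x))"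
  shows "\<forall>\<theta>::real.
    (cmod q)\<^sup>2 * (opnorm_A A (ReA A (\<lambda>x. hscale (exp (\<i> * of_real \<theta>)) (T x))))\<^sup>2
      = (cmod q)\<^sup>2 * (opnorm_A A (ImA A (\<lambda>x. hscale (exp (\<i> * of_real \<theta>)) (T x))))\<^sup>2
    \<and> (cmod q)\<^sup>2 * (opnorm_A A (ImA A (\<lambda>x. hscale (exp (\<i> * of_real \<theta>)) (T x))))\<^sup>2
      = (cmod q)\<^sup>2 / 4 * opnorm_A A (\<lambda>x. sharpA A T (T x) + T (sharpA A T x))"
proof (intro allI)
  fix \<theta> :: real
  note A = assms(1) and dim = assms(2) and T = assms(3) and q1 = assms(4) and hyp = assms(5)
  have b: "bounded_op A" using pos_bop[OF A] .
  define c where "c = exp (\<i> * of_real \<theta>)"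
  have c1: "cmod c = 1" unfolding c_def by (rule norm_exp_i_times)
  have cc: "c * cnj c = 1" using complex_norm_square[of c] c1 by simp
  define S where "S = (\<lambda>x. hscale c (T x))"
  define Ts where "Ts = sharpA A T"
  define Xop where "Xop = (\<lambda>x. Ts (T x) + T (Ts x))"
  define N where "N = opnorm_A A Xop"
  define R where "R = ReA A S"
  define I where "I = ImA A S"
  define \<rho> where "\<rho> = opnorm_A A R"
  define \<iota> where "\<iota> = opnorm_A A I"
  have goal_eq: "ReA A (\<lambda>x. hscale (exp (\<i> * of_real \<theta>)) (T x)) = R"
     "ImA A (\<lambda>x. hscale (exp (\<i> * of_real \<theta>)) (T x)) = I"
     "(\<lambda>x. sharpA A T (T x) + T (sharpA A T x)) = Xop"
    unfolding R_def I_def S_def c_def Xop_def Ts_def by simp_all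
  have key: "(cmod q)\<^sup>2 * \<rho>\<^sup>2 = (cmod q)\<^sup>2 * \<iota>\<^sup>2 \<and> (cmod q)\<^sup>2 * \<iota>\<^sup>2 = (cmod q)\<^sup>2 / 4 * N"
  proof (cases "q = 0")
    case True then show ?thesis by simp
  next
    case False
    then have qp: "cmod q > 0" by simp
    have Tb: "bounded_op T" using T unfolding BA_def by blast
    have S: "S \<in> BA A" unfolding S_def by (rule BA_scaled(1)[OF A T])
    have Ss: "sharpA A S = (\<lambda>x. hscale (cnj c) (Ts x))" unfolding S_def Ts_def by (rule BA_scaled(2)[OF A T])
    have Tsb: "bounded_op Ts" unfolding Ts_def by (rule sharp_props(1)[OF A T])
    obtain u0 where u0: "u0 \<in> RA A" "u0 \<noteq> 0"
    proof -
      obtain u v where uv: "u \<in> range A" "\<And>a b. hscale a u + hscale b v = 0 \<Longrightarrow> a = 0 \<and> b = 0"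
        using dim unfolding range_dim_ge_2_def by blast
      have "u \<noteq> 0" using uv(2)[of 1 0] by auto
      then show ?thesis using that in_hclosure[OF uv(1)] by blast
    qed
    define w where "w = wqA q A T / cmod q"
    have Sform: "cmod (inner_A A (S z) z) \<le> w * (norm_A A z)\<^sup>2" for z
    proof -
      have e: "cmod (inner_A A (S z) z) = cmod (inner_A A (T z) z)"
        unfolding S_def by (simp add: innerA_L[OF A] norm_mult c1)
      show ?thesis
      proof (cases "norm_A A z = 0")
        case True
        have "cmod (inner_A A (T z) z) \<le> norm_A A (T z) * norm_A A z" by (rule pos_CS2[OF A])
        then show ?thesis using e True by simp
      next
        case False
        define n where "n = norm_A A z"
        have np: "n > 0" using False normA_nonneg[OF A, of z] n_def by linarith
        define z' where "z' = hscale (of_real (1 / n)) z"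
        have cn: "cmod (of_real (1 / n) :: complex) = 1 / n" using np by (subst norm_of_real) simp
        have z1: "norm_A A z' = 1" unfolding z'_def using np cn by (simp add: normA_scale[OF A] n_def[symmetric])
        have "inner_A A (T z') z' = of_real (1 / n) * of_real (1 / n) * inner_A A (T z) z"
          unfolding z'_def by (simp add: bop_scale[OF Tb] innerA_L[OF A] innerA_R)
        then have "cmod (inner_A A (T z') z') = cmod (inner_A A (T z) z) / n\<^sup>2"
          using np by (simp add: norm_mult norm_divide power2_eq_square)
        moreover have "cmod q * cmod (inner_A A (T z') z') \<le> wqA q A T"
          by (rule wq_lower[OF A dim T q1 z1])
        ultimately have "cmod q * (cmod (inner_A A (T z) z) / n\<^sup>2) \<le> wqA q A T" by simp
        then have "cmod (inner_A A (T z) z) \<le> wqA q A T / cmod q * n\<^sup>2"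
          using qp np by (simp add: field_simps)
        then show ?thesis using e w_def n_def by simp
      qed
    qed
    note RI = ReIm_props[OF A S]
    have bR: "norm_A A (ReA A S x) \<le> w * norm_A A x" if "x \<in> RA A" "x \<noteq> 0" for x
      using pol[OF A RI(1) RI(3) order_trans[OF RI(5) Sform] range_normA_pos[OF A that]] .
    have bI: "norm_A A (ImA A S x) \<le> w * norm_A A x" if "x \<in> RA A" "x \<noteq> 0" for x
      using pol[OF A RI(2) RI(4) order_trans[OF RI(6) Sform] range_normA_pos[OF A that]] .
    note OR = opnorm_props[OF A RI(1) RI(7) bR u0]
    note OI = opnorm_props[OF A RI(2) RI(8) bI u0]
    have Rprops: "0 \<le> \<rho>" "\<rho> \<le> w" "\<And>y. norm_A A (R y) \<le> \<rho> * norm_A A y"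
      unfolding \<rho>_def R_def using OR by auto
    have Iprops: "0 \<le> \<iota>" "\<iota> \<le> w" "\<And>y. norm_A A (I y) \<le> \<iota> * norm_A A y"
      unfolding \<iota>_def I_def using OI by auto
    have decomp: "R (R x) + I (I x) = hscale (1/2) (Xop x)" for x
    proof -
      have "R (R x) + I (I x) = hscale (1/2) (S (sharpA A S x) + sharpA A S (S x))"
        unfolding R_def I_def by (rule RI(9))
      also have "S (sharpA A S x) + sharpA A S (S x) = Xop x"
        unfolding Ss unfolding S_def Xop_def
        by (simp add: bop_scale[OF Tb] bop_scale[OF Tsb] hscale_hscale cc mult.commute[of "cnj c"] hscale_one add.commute)
      finally show ?thesis .
    qed
    have Nle: "N \<le> 2 * (\<rho>\<^sup>2 + \<iota>\<^sup>2)"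
      unfolding N_def opnorm_A_def
    proof (rule cSup_least)
      show "{norm_A A (Xop x) / norm_A A x |x. x \<in> RA A \<and> x \<noteq> 0} \<noteq> {}" using u0 by blast
      fix d assume "d \<in> {norm_A A (Xop x) / norm_A A x |x. x \<in> RA A \<and> x \<noteq> 0}"
      then obtain x where x: "d = norm_A A (Xop x) / norm_A A x" "x \<in> RA A" "x \<noteq> 0" by blast
      have xp: "norm_A A x > 0" by (rule range_normA_pos[OF A x(2,3)])
      have "Xop x = hscale 2 (R (R x) + I (I x))"
        unfolding decomp by (simp add: hscale_hscale hscale_one)
      then have "norm_A A (Xop x) = 2 * norm_A A (R (R x) + I (I x))" by (simp add: normA_scale[OF A])
      also have "\<dots> \<le> 2 * (norm_A A (R (R x)) + norm_A A (I (I x)))"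
        using normA_triangle[OF A, of "R (R x)" "I (I x)"] by simp
      also have "\<dots> \<le> 2 * (\<rho> * norm_A A (R x) + \<iota> * norm_A A (I x))"
        using Rprops(3) Iprops(3) by (simp add: add_mono)
      also have "\<dots> \<le> 2 * (\<rho> * (\<rho> * norm_A A x) + \<iota> * (\<iota> * norm_A A x))"
        using Rprops Iprops by (simp add: add_mono mult_left_mono)
      also have "\<dots> = 2 * (\<rho>\<^sup>2 + \<iota>\<^sup>2) * norm_A A x" by (simp add: power2_eq_square algebra_simps)
      finally show "d \<le> 2 * (\<rho>\<^sup>2 + \<iota>\<^sup>2)" using x(1) xp by (simp add: divide_le_eq)
    qed
    have w2: "w\<^sup>2 = N / 4" unfolding w_def using hyp qp N_def Xop_def Ts_def
      by (simp add: power_divide)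
    have r2: "\<rho>\<^sup>2 \<le> N / 4" using power_mono[OF Rprops(2) Rprops(1), of 2] w2 by simp
    have i2: "\<iota>\<^sup>2 \<le> N / 4" using power_mono[OF Iprops(2) Iprops(1), of 2] w2 by simp
    have Nle': "N \<le> 2 * \<rho>\<^sup>2 + 2 * \<iota>\<^sup>2" using Nle by simp
    have "\<rho>\<^sup>2 = N / 4" using r2 i2 Nle' by linarith
    moreover have "\<iota>\<^sup>2 = N / 4" using r2 i2 Nle' by linarith
    ultimately show ?thesis by simp
  qed
  show "(cmod q)\<^sup>2 * (opnorm_A A (ReA A (\<lambda>x. hscale (exp (\<i> * of_real \<theta>)) (T x))))\<^sup>2
      = (cmod q)\<^sup>2 * (opnorm_A A (ImA A (\<lambda>x. hscale (exp (\<i> * of_real \<theta>)) (T x))))\<^sup>2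
    \<and> (cmod q)\<^sup>2 * (opnorm_A A (ImA A (\<lambda>x. hscale (exp (\<i> * of_real \<theta>)) (T x))))\<^sup>2
      = (cmod q)\<^sup>2 / 4 * opnorm_A A (\<lambda>x. sharpA A T (T x) + T (sharpA A T x))"
    unfolding goal_eq using key unfolding \<rho>_def \<iota>_def N_def .
qed

end
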